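(* Let $A\in\mathbb{C}^{n\times n}$ be stable (all eigenvalues in the open left half-plane), let $B\in\mathbb{C}^{n\times r}$, and suppose $(A,B)$ is controllable. Let $X\in\mathbb{C}^{n\times n}$ solve the Lyapunov equation $AX+XA^*=-BB^*$, and let $s_1\ge s_2\ge\cdots\ge s_n>0$ be the singular values of $X$. Let $\omega_1\ge\omega_2\ge\cdots\ge\omega_n$ denote the eigenvalues of the Hermitian matrix $\tfrac12(A+A^* )$ (so $\omega_k$ is the $k$th rightmost). Then for all $k=1,\ldots,n$, $$\frac{s_k}{s_1}-1-\frac{\|B\|^2}{2s_1\|A\|}\;\le\;\frac{\omega_k}{\|A\|}\;\le\;1-\frac{s_{n-k+1}}{s_1}.$$
   Context: $\|\cdot\|$ denotes the vector 2-norm and the induced matrix (spectral) norm. $(A,B)$ controllable means the Krylov matrix $[B\ AB\ \cdots\ A^{n-1}B]$ has rank $n$. Under stability of $A$ and controllability of $(A,B)$, the solution $X$ of $AX+XA^*=-BB^*$ is unique and Hermitian positive definite, so its singular values equal its eigenvalues. *)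

theory Defs
  imports "HOL-Analysis.Analysis" "Jordan_Normal_Form.Schur_Decomposition" "Jordan_Normal_Form.DL_Rank"
begin

definition vnorm2 :: "complex vec \<Rightarrow> real" where
  "vnorm2 v = sqrt (\<Sum>i<dim_vec v. (cmod (v $ i))\<^sup>2)"

definition spec_norm :: "complex mat \<Rightarrow> real" where
  "spec_norm M = Sup {vnorm2 (M *\<^sub>v v) | v. v \<in> carrier_vec (dim_col M) \<and> vnorm2 v \<le> 1}"

definition stable_mat :: "complex mat \<Rightarrow> bool" where
  "stable_mat A \<longleftrightarrow> (\<forall>z. eigenvalue A z \<longrightarrow> Re z < 0)"

text \<open>Krylov matrix [B AB ... A^(n-1)B], of size n x (n*r); column j*r+c is column c of A^j B.\<close>
definition krylov_mat :: "complex mat \<Rightarrow> complex mat \<Rightarrow> complex mat" where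
  "krylov_mat A B = mat (dim_row A) (dim_row A * dim_col B)
     (\<lambda>(i, j). ((A ^\<^sub>m (j div dim_col B)) * B) $$ (i, j mod dim_col B))"

definition controllable :: "complex mat \<Rightarrow> complex mat \<Rightarrow> bool" where
  "controllable A B \<longleftrightarrow> vec_space.rank (dim_row A) (krylov_mat A B) = dim_row A"

text \<open>ws is the list of eigenvalues of the n x n matrix M, repeated by algebraic multiplicity,
  all real, in non-increasing order (w_1 \<ge> w_2 \<ge> ...).\<close>
definition sorted_real_eigenvalues :: "complex mat \<Rightarrow> real list \<Rightarrow> bool" where
  "sorted_real_eigenvalues M ws \<longleftrightarrow> length ws = dim_row M \<and> sorted_wrt (\<ge>) ws \<and>
     char_poly M = (\<Prod>w\<leftarrow>ws. [:- complex_of_real w, 1:])"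

definition singular_values :: "complex mat \<Rightarrow> real list \<Rightarrow> bool" where
  "singular_values M ss \<longleftrightarrow> (\<forall>s\<in>set ss. s \<ge> 0) \<and>
     sorted_real_eigenvalues (mat_adjoint M * M) (map (\<lambda>s. s\<^sup>2) ss)"

end

theory Submission
  imports Defs "Jordan_Normal_Form.Spectral_Radius" "HOL-Combinatorics.Permutations"
begin



definition ip :: "complex vec \<Rightarrow> complex vec \<Rightarrow> complex" where
  "ip x y = (\<Sum>i<dim_vec x. cnj (x$i) * y$i)"

lemma mat_adjoint_alt: "mat_adjoint (M::complex mat) = mat (dim_col M) (dim_row M) (\<lambda>(i,j). cnj (M$$(j,i)))"
  by (rule eq_matI, auto simp: mat_adjoint_def mat_of_rows_def)

lemma adj_dim[simp]: "dim_row (mat_adjoint (M::complex mat)) = dim_col M" "dim_col (mat_adjoint M) = dim_row M"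
  unfolding mat_adjoint_alt by simp_all

lemma adj_index[simp]: "i < dim_col M \<Longrightarrow> j < dim_row M \<Longrightarrow> mat_adjoint (M::complex mat) $$ (i,j) = cnj (M$$(j,i))"
  by (auto simp: mat_adjoint_alt)

lemma adj_carrier[simp]: "(M::complex mat) \<in> carrier_mat n m \<Longrightarrow> mat_adjoint M \<in> carrier_mat m n"
  by auto

lemma adj_adj[simp]: "mat_adjoint (mat_adjoint (M::complex mat)) = M"
  by (rule eq_matI, auto)

lemma adj_mult: assumes "M \<in> carrier_mat n m" "N \<in> carrier_mat m k"
  shows "mat_adjoint (M * N) = mat_adjoint N * mat_adjoint (M::complex mat)"
  by (rule eq_matI, insert assms, auto simp: scalar_prod_def cnj_sum intro!: sum.cong)

lemma adj_add: assumes "M \<in> carrier_mat n m" "N \<in> carrier_mat n m"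
  shows "mat_adjoint (M + N) = mat_adjoint M + mat_adjoint (N::complex mat)"
  by (rule eq_matI, insert assms, auto)

lemma adj_minus: assumes "M \<in> carrier_mat n m" "N \<in> carrier_mat n m"
  shows "mat_adjoint (M - N) = mat_adjoint M - mat_adjoint (N::complex mat)"
  by (rule eq_matI, insert assms, auto)

lemma adj_uminus: "mat_adjoint (- M) = - mat_adjoint (M::complex mat)"
  by (rule eq_matI, auto)

lemma adj_smult: "mat_adjoint (c \<cdot>\<^sub>m M) = cnj c \<cdot>\<^sub>m mat_adjoint (M::complex mat)"
  by (rule eq_matI, auto)

lemma adj_one[simp]: "mat_adjoint (1\<^sub>m n :: complex mat) = 1\<^sub>m n"
  by (rule eq_matI, auto)

lemma ip_mult: assumes "(M::complex mat) \<in> carrier_mat n m" "x \<in> carrier_vec n" "y \<in> carrier_vec m"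
  shows "ip x (M *\<^sub>v y) = ip (mat_adjoint M *\<^sub>v x) y"
proof -
  have "ip x (M *\<^sub>v y) = (\<Sum>i<n. \<Sum>j<m. cnj (x$i) * M$$(i,j) * y$j)"
    using assms by (auto simp: ip_def scalar_prod_def sum_distrib_left mult.assoc atLeast0LessThan intro!: sum.cong)
  also have "\<dots> = (\<Sum>j<m. \<Sum>i<n. cnj (x$i) * M$$(i,j) * y$j)" by (rule sum.swap)
  also have "\<dots> = ip (mat_adjoint M *\<^sub>v x) y"
    using assms by (auto simp: ip_def scalar_prod_def sum_distrib_right cnj_sum atLeast0LessThan
        intro!: sum.cong)
  finally show ?thesis .
qed

lemma ip_cnj: "dim_vec x = dim_vec y \<Longrightarrow> ip y x = cnj (ip x y)"
  by (auto simp: ip_def cnj_sum intro!: sum.cong)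

lemma ip_add_right: "y \<in> carrier_vec n \<Longrightarrow> z \<in> carrier_vec n \<Longrightarrow> x \<in> carrier_vec n \<Longrightarrow> ip x (y + z) = ip x y + ip x z"
  by (auto simp: ip_def sum.distrib algebra_simps)

lemma ip_minus_right: "y \<in> carrier_vec n \<Longrightarrow> z \<in> carrier_vec n \<Longrightarrow> x \<in> carrier_vec n \<Longrightarrow> ip x (y - z) = ip x y - ip x z"
  by (auto simp: ip_def sum_subtractf algebra_simps)

lemma ip_smult_right: "y \<in> carrier_vec n \<Longrightarrow> x \<in> carrier_vec n \<Longrightarrow> ip x (c \<cdot>\<^sub>v y) = c * ip x y"
  by (auto simp: ip_def sum_distrib_left algebra_simps)

lemma ip_self: "ip x x = complex_of_real ((vnorm2 x)\<^sup>2)"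
proof -
  have "ip x x = (\<Sum>i<dim_vec x. complex_of_real ((cmod (x$i))\<^sup>2))"
    by (auto simp: ip_def intro!: sum.cong, metis complex_norm_square mult.commute of_real_power)
  also have "\<dots> = complex_of_real (\<Sum>i<dim_vec x. (cmod (x$i))\<^sup>2)" by simp
  finally show ?thesis unfolding vnorm2_def by (simp add: sum_nonneg)
qed

lemma vnorm2_nonneg: "vnorm2 x \<ge> 0" by (simp add: vnorm2_def sum_nonneg)

lemma vnorm2_L2: "vnorm2 x = L2_set (\<lambda>i. cmod (x$i)) {..<dim_vec x}"
  by (simp add: vnorm2_def L2_set_def)

lemma ip_cs: assumes "dim_vec x = dim_vec y" shows "cmod (ip x y) \<le> vnorm2 x * vnorm2 y"
proof -
  have "cmod (ip x y) \<le> (\<Sum>i<dim_vec x. cmod (cnj (x$i) * y$i))"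
    unfolding ip_def by (rule norm_sum)
  also have "\<dots> = (\<Sum>i<dim_vec x. \<bar>cmod (x$i)\<bar> * \<bar>cmod (y$i)\<bar>)" by (simp add: norm_mult)
  also have "\<dots> \<le> L2_set (\<lambda>i. cmod (x$i)) {..<dim_vec x} * L2_set (\<lambda>i. cmod (y$i)) {..<dim_vec x}"
    by (rule L2_set_mult_ineq)
  finally show ?thesis using assms by (simp add: vnorm2_L2)
qed

lemma vnorm2_zero_iff: "vnorm2 x = 0 \<longleftrightarrow> x = 0\<^sub>v (dim_vec x)"
proof
  assume "vnorm2 x = 0"
  hence "(\<Sum>i<dim_vec x. (cmod (x$i))\<^sup>2) = 0" unfolding vnorm2_def by simp
  hence "\<forall>i\<in>{..<dim_vec x}. (cmod (x$i))\<^sup>2 = 0" by (subst (asm) sum_nonneg_eq_0_iff, auto)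
  thus "x = 0\<^sub>v (dim_vec x)" by (auto intro!: eq_vecI)
next
  assume "x = 0\<^sub>v (dim_vec x)"
  hence "\<forall>i<dim_vec x. x$i = 0" by (metis index_zero_vec(1))
  then show "vnorm2 x = 0" unfolding vnorm2_def by simp
qed




lemma ip_cscalar: "dim_vec x = dim_vec y \<Longrightarrow> x \<bullet>c y = cnj (ip x y)"
  by (auto simp: ip_def scalar_prod_def cnj_sum atLeast0LessThan mult.commute intro!: sum.cong)

lemma adj_mult_index: assumes "W \<in> carrier_mat n m" "i < m" "j < m"
  shows "(mat_adjoint W * W) $$ (i,j) = ip (col W i) (col (W::complex mat) j)"
  using assms by (auto simp: ip_def scalar_prod_def atLeast0LessThan intro!: sum.cong)

lemma unitary_ext: assumes v: "v \<in> carrier_vec n" and v1: "vnorm2 v = 1"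
  shows "\<exists>W. W \<in> carrier_mat n n \<and> mat_adjoint W * W = 1\<^sub>m n \<and> col W 0 = v"
proof -
  interpret cof_vec_space n "TYPE(complex)" .
  have v0: "v \<noteq> 0\<^sub>v n" using v1 v vnorm2_zero_iff[of v] by auto
  define b where "b = basis_completion v"
  from basis_completion[OF v v0, folded b_def]
  have dist_b: "distinct b" and indep: "\<not> lin_dep (set b)" and b: "set b \<subseteq> carrier_vec n"
    and hdb: "hd b = v" and len_b: "length b = n" by auto
  have n: "n \<noteq> 0" using v0 v by (auto intro!: eq_vecI)
  from hdb len_b n obtain vs where bv: "b = v # vs" by (cases b, auto)
  define ws where "ws = gram_schmidt n b"
  from gram_schmidt_result[OF b dist_b indep ws_def]
  have ws: "set ws \<subseteq> carrier_vec n" "corthogonal ws" "length ws = n" by (auto simp: len_b)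
  have hdws: "hd ws = v" unfolding ws_def bv using gram_schmidt_hd[OF v] by simp
  define W where "W = mat n n (\<lambda>(i,j). (ws!j)$i / complex_of_real (vnorm2 (ws!j)))"
  have W: "W \<in> carrier_mat n n" unfolding W_def by auto
  have wsc: "j < n \<Longrightarrow> ws!j \<in> carrier_vec n" for j using ws by auto
  have colW: "j < n \<Longrightarrow> col W j = (1 / complex_of_real (vnorm2 (ws!j))) \<cdot>\<^sub>v ws!j" for j
    unfolding W_def using wsc[of j] by (auto intro!: eq_vecI)
  have ipws: "i < n \<Longrightarrow> j < n \<Longrightarrow> ip (ws!i) (ws!j) = 0 \<longleftrightarrow> i \<noteq> j" for i j
    using corthogonalD[OF ws(2), of i j] ws(3) ip_cscalar[of "ws!i" "ws!j"] wsc[of i] wsc[of j] by auto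
  have nz: "j < n \<Longrightarrow> vnorm2 (ws!j) \<noteq> 0" for j
    using ipws[of j j] ip_self[of "ws!j"] by auto
  have "mat_adjoint W * W = 1\<^sub>m n"
  proof (rule eq_matI)
    fix i j assume ij: "i < dim_row (1\<^sub>m n)" "j < dim_col (1\<^sub>m n)"
    hence ij: "i < n" "j < n" by auto
    have "(mat_adjoint W * W) $$ (i,j) = ip (col W i) (col W j)" using adj_mult_index[OF W ij] .
    also have "\<dots> = cnj (1 / complex_of_real (vnorm2 (ws!i))) * (1 / complex_of_real (vnorm2 (ws!j))) * ip (ws!i) (ws!j)"
      unfolding colW[OF ij(1)] colW[OF ij(2)] using wsc[OF ij(1)] wsc[OF ij(2)]
      by (auto simp: ip_def sum_distrib_left algebra_simps intro!: sum.cong)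
    also have "\<dots> = 1\<^sub>m n $$ (i,j)"
    proof (cases "i = j")
      case True
      then show ?thesis using ij nz[OF ij(1)] ip_self[of "ws!i"]
        by (simp add: power2_eq_square)
    next
      case False
      then show ?thesis using ipws[OF ij] ij by simp
    qed
    finally show "(mat_adjoint W * W) $$ (i,j) = 1\<^sub>m n $$ (i,j)" .
  qed (insert W, auto)
  moreover have "col W 0 = v"
  proof -
    have "ws!0 = v" using hdws ws(3) n by (cases ws, auto)
    thus ?thesis using colW[of 0] n v1 by simp
  qed
  ultimately show ?thesis using W by blast
qed

lemma mult_idx: "A \<in> carrier_mat n k \<Longrightarrow> B \<in> carrier_mat k m \<Longrightarrow> i < n \<Longrightarrow> j < m \<Longrightarrow>
  (A * B) $$ (i,j) = (\<Sum>l<k. A$$(i,l) * B$$(l,j))"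
  by (auto simp: scalar_prod_def atLeast0LessThan intro!: sum.cong)

lemma vnorm2_smult: "vnorm2 (c \<cdot>\<^sub>v x) = cmod c * vnorm2 x"
proof -
  have "vnorm2 (c \<cdot>\<^sub>v x) = sqrt ((cmod c)\<^sup>2 * (\<Sum>i<dim_vec x. (cmod (x$i))\<^sup>2))"
    unfolding vnorm2_def by (auto simp: sum_distrib_left norm_mult power_mult_distrib)
  also have "\<dots> = cmod c * vnorm2 x" unfolding vnorm2_def by (simp add: real_sqrt_mult)
  finally show ?thesis .
qed

definition diagr :: "nat \<Rightarrow> (nat \<Rightarrow> real) \<Rightarrow> complex mat" where
  "diagr n l = mat n n (\<lambda>(i,j). if i = j then complex_of_real (l i) else 0)"

lemma diagr_carrier[simp]: "diagr n l \<in> carrier_mat n n" by (simp add: diagr_def)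

lemma mult_diagr_idx: "U \<in> carrier_mat n n \<Longrightarrow> i < n \<Longrightarrow> j < n \<Longrightarrow> (U * diagr n l) $$ (i,j) = U $$ (i,j) * complex_of_real (l j)"
proof -
  assume U: "U \<in> carrier_mat n n" and ij: "i < n" "j < n"
  have "(U * diagr n l) $$ (i,j) = (\<Sum>k<n. U$$(i,k) * diagr n l $$ (k,j))" by (rule mult_idx[OF U _ ij], simp)
  also have "\<dots> = (\<Sum>k\<in>{j}. U$$(i,k) * diagr n l $$ (k,j))"
    by (rule sum.mono_neutral_right, insert ij, auto simp: diagr_def)
  finally show ?thesis using ij by (simp add: diagr_def)
qed

lemma hermitian_diag: fixes M :: "complex mat"
  assumes "M \<in> carrier_mat n n" "mat_adjoint M = M"
  shows "\<exists>U l. U \<in> carrier_mat n n \<and> mat_adjoint U * U = 1\<^sub>m n \<and> M * U = U * diagr n l"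
  using assms
proof (induct n arbitrary: M)
  case 0
  show ?case by (intro exI[of _ "1\<^sub>m 0"] exI[of _ "\<lambda>_. 0"], insert 0, auto intro!: eq_matI simp: diagr_def)
next
  case (Suc m M)
  let ?n = "Suc m"
  have M: "M \<in> carrier_mat ?n ?n" and hM: "mat_adjoint M = M" using Suc by auto
  from spectrum_non_empty[OF M] obtain e where "e \<in> spectrum M" by auto
  hence "eigenvalue M e" unfolding spectrum_def by auto
  then obtain v0 where ev: "eigenvector M v0 e" unfolding eigenvalue_def by auto
  hence v0: "v0 \<in> carrier_vec ?n" "v0 \<noteq> 0\<^sub>v ?n" "M *\<^sub>v v0 = e \<cdot>\<^sub>v v0" using M unfolding eigenvector_def by auto
  have nv0: "vnorm2 v0 \<noteq> 0" using v0 vnorm2_zero_iff[of v0] by auto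
  define v where "v = (1 / complex_of_real (vnorm2 v0)) \<cdot>\<^sub>v v0"
  have v: "v \<in> carrier_vec ?n" using v0 by (simp add: v_def)
  have v1: "vnorm2 v = 1" unfolding v_def vnorm2_smult using nv0 vnorm2_nonneg[of v0]
    by (simp add: norm_divide)
  have Mv: "M *\<^sub>v v = e \<cdot>\<^sub>v v" unfolding v_def using v0 M
    by (simp add: mult_mat_vec smult_smult_assoc mult.commute)
  from unitary_ext[OF v v1] obtain W where W: "W \<in> carrier_mat ?n ?n"
    and WW: "mat_adjoint W * W = 1\<^sub>m ?n" and cW: "col W 0 = v" by auto
  have aW: "mat_adjoint W \<in> carrier_mat ?n ?n" using W by simp
  have WW': "W * mat_adjoint W = 1\<^sub>m ?n" using mat_mult_left_right_inverse[OF aW W WW] .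
  define M' where "M' = mat_adjoint W * M * W"
  have M': "M' \<in> carrier_mat ?n ?n" unfolding M'_def using W M by auto
  have hM': "mat_adjoint M' = M'"
    unfolding M'_def using W M aW
    by (simp add: adj_mult[of _ ?n ?n _ ?n] hM assoc_mult_mat[of _ ?n ?n _ ?n _ ?n])
  have cM': "col M' 0 = e \<cdot>\<^sub>v unit_vec ?n 0"
  proof -
    have "col M' 0 = (mat_adjoint W * M) *\<^sub>v col W 0" unfolding M'_def
      by (rule col_mult2[OF mult_carrier_mat[OF aW M] W], simp)
    also have "\<dots> = mat_adjoint W *\<^sub>v (M *\<^sub>v v)" unfolding cW using aW M v by simp
    also have "\<dots> = e \<cdot>\<^sub>v (mat_adjoint W *\<^sub>v col W 0)" unfolding Mv cW using aW v by (simp add: mult_mat_vec)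
    also have "mat_adjoint W *\<^sub>v col W 0 = col (mat_adjoint W * W) 0" using aW W col_mult2[OF aW W, of 0] by simp
    also have "\<dots> = unit_vec ?n 0" unfolding WW by simp
    finally show ?thesis .
  qed
  have M'c0: "i < ?n \<Longrightarrow> M' $$ (i,0) = (if i = 0 then e else 0)" for i
  proof -
    assume i: "i < ?n"
    have "col M' 0 $ i = (e \<cdot>\<^sub>v unit_vec ?n 0) $ i" using cM' by simp
    thus ?thesis using i M' by (auto simp: unit_vec_def)
  qed
  have M'r0: "j < ?n \<Longrightarrow> M' $$ (0,j) = cnj (M' $$ (j,0))" for j
    using arg_cong[OF hM', of "\<lambda>A. A $$ (0,j)"] M' by simp
  have ereal: "cnj e = e" using M'r0[of 0] M'c0[of 0] by simp
  define M3 where "M3 = mat m m (\<lambda>(i,j). M' $$ (Suc i, Suc j))"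
  have M3: "M3 \<in> carrier_mat m m" unfolding M3_def by simp
  have hM3: "mat_adjoint M3 = M3"
  proof (rule eq_matI)
    fix i j assume "i < dim_row M3" "j < dim_col M3"
    thus "mat_adjoint M3 $$ (i,j) = M3 $$ (i,j)"
      using arg_cong[OF hM', of "\<lambda>A. A $$ (Suc i, Suc j)"] M' M3 by (simp add: M3_def)
  qed (insert M3, auto)
  from Suc(1)[OF M3 hM3] obtain U3 l3 where U3: "U3 \<in> carrier_mat m m"
    and UU3: "mat_adjoint U3 * U3 = 1\<^sub>m m" and MU3: "M3 * U3 = U3 * diagr m l3" by auto
  define V where "V = mat ?n ?n (\<lambda>(i,j). if i = 0 \<and> j = 0 then 1 else if i = 0 \<or> j = 0 then 0 else U3 $$ (i - 1, j - 1))"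
  define l where "l = (\<lambda>i. if i = 0 then Re e else l3 (i - 1))"
  have V: "V \<in> carrier_mat ?n ?n" unfolding V_def by simp
  have VV: "mat_adjoint V * V = 1\<^sub>m ?n"
  proof (rule eq_matI)
    fix i j assume ij: "i < dim_row (1\<^sub>m ?n)" "j < dim_col (1\<^sub>m ?n)"
    hence ij: "i < ?n" "j < ?n" by auto
    have "(mat_adjoint V * V) $$ (i,j) = (\<Sum>k<?n. cnj (V $$ (k,i)) * V $$ (k,j))"
      using mult_idx[OF adj_carrier[OF V] V ij] ij V by simp
    also have "\<dots> = cnj (V $$ (0,i)) * V $$ (0,j) + (\<Sum>k<m. cnj (V $$ (Suc k,i)) * V $$ (Suc k,j))"
      by (rule sum.lessThan_Suc_shift)
    also have "\<dots> = 1\<^sub>m ?n $$ (i,j)"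
    proof (cases i)
      case 0
      then show ?thesis using ij by (simp add: V_def)
    next
      case (Suc i')
      note i = this
      show ?thesis
      proof (cases j)
        case 0
        then show ?thesis using ij i by (simp add: V_def)
      next
        case (Suc j')
        have "(\<Sum>k<m. cnj (V $$ (Suc k,i)) * V $$ (Suc k,j)) = (mat_adjoint U3 * U3) $$ (i',j')"
          using mult_idx[OF adj_carrier[OF U3] U3, of i' j'] ij i Suc U3 by (simp add: V_def)
        then show ?thesis using ij i Suc UU3 by (simp add: V_def)
      qed
    qed
    finally show "(mat_adjoint V * V) $$ (i,j) = 1\<^sub>m ?n $$ (i,j)" .
  qed (insert V, auto)
  have M'V: "M' * V = V * diagr ?n l"
  proof (rule eq_matI)
    fix i j assume ij: "i < dim_row (V * diagr ?n l)" "j < dim_col (V * diagr ?n l)"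
    hence ij: "i < ?n" "j < ?n" using V by (auto simp: diagr_def)
    have "(M' * V) $$ (i,j) = (\<Sum>k<?n. M' $$ (i,k) * V $$ (k,j))" by (rule mult_idx[OF M' V ij])
    also have "\<dots> = M' $$ (i,0) * V $$ (0,j) + (\<Sum>k<m. M' $$ (i,Suc k) * V $$ (Suc k,j))"
      by (rule sum.lessThan_Suc_shift)
    also have "\<dots> = (V * diagr ?n l) $$ (i,j)"
    proof (cases i)
      case 0
      have "(\<Sum>k<m. M' $$ (i,Suc k) * V $$ (Suc k,j)) = 0"
        using M'r0 M'c0 0 by (intro sum.neutral, auto)
      then show ?thesis unfolding mult_diagr_idx[OF V ij] using 0 M'c0[of 0] ij ereal
        by (auto simp: V_def l_def complex_eq_iff)
    next
      case (Suc i')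
      note i = this
      show ?thesis
      proof (cases j)
        case 0
        then show ?thesis unfolding mult_diagr_idx[OF V ij] using ij i M'c0[of i] by (simp add: V_def)
      next
        case (Suc j')
        have "(\<Sum>k<m. M' $$ (i,Suc k) * V $$ (Suc k,j)) = (M3 * U3) $$ (i',j')"
          using mult_idx[OF M3 U3, of i' j'] ij i Suc U3 by (simp add: V_def M3_def)
        also have "\<dots> = U3 $$ (i',j') * complex_of_real (l3 j')"
          unfolding MU3 using mult_diagr_idx[OF U3, of i' j'] ij i Suc by simp
        finally show ?thesis unfolding mult_diagr_idx[OF V ij] using ij i Suc M'c0[of i]
          by (simp add: V_def l_def)
      qed
    qed
    finally show "(M' * V) $$ (i,j) = (V * diagr ?n l) $$ (i,j)" .
  qed (insert V M', auto simp: diagr_def)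
  define U where "U = W * V"
  have U: "U \<in> carrier_mat ?n ?n" unfolding U_def using W V by simp
  have "mat_adjoint U * U = mat_adjoint V * ((mat_adjoint W * W) * V)"
    unfolding U_def using W V aW
    by (simp add: adj_mult[OF W V] assoc_mult_mat[of _ ?n ?n _ ?n _ ?n])
  also have "\<dots> = 1\<^sub>m ?n" unfolding WW using VV V by simp
  finally have UU: "mat_adjoint U * U = 1\<^sub>m ?n" .
  have MW: "M * W = W * M'"
  proof -
    have "W * M' = (W * mat_adjoint W) * (M * W)" unfolding M'_def using W M aW
      by (simp add: assoc_mult_mat[of _ ?n ?n _ ?n _ ?n])
    thus ?thesis unfolding WW' using M by simp
  qed
  have "M * U = (M * W) * V" unfolding U_def by (rule assoc_mult_mat[symmetric, OF M W V])
  also have "\<dots> = (W * M') * V" by (simp only: MW)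
  also have "\<dots> = W * (M' * V)" by (rule assoc_mult_mat[OF W M' V])
  also have "\<dots> = (W * V) * diagr ?n l" unfolding M'V by (rule assoc_mult_mat[symmetric, OF W V diagr_carrier])
  also have "\<dots> = U * diagr ?n l" unfolding U_def ..
  finally show ?case using U UU by blast
qed




lemma cp_diag: fixes M U :: "complex mat"
  assumes M: "M \<in> carrier_mat n n" and U: "U \<in> carrier_mat n n" and UU: "mat_adjoint U * U = 1\<^sub>m n"
    and MU: "M * U = U * diagr n l"
  shows "char_poly M = (\<Prod>a\<leftarrow>map (\<lambda>i. complex_of_real (l i)) [0..<n]. [:-a,1:])"
proof -
  have aU: "mat_adjoint U \<in> carrier_mat n n" using U by simp
  have UU': "U * mat_adjoint U = 1\<^sub>m n" using mat_mult_left_right_inverse[OF aU U UU] .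
  have "M = M * (U * mat_adjoint U)" unfolding UU' using M by simp
  also have "\<dots> = (M * U) * mat_adjoint U" using assoc_mult_mat[OF M U aU] by simp
  also have "\<dots> = U * diagr n l * mat_adjoint U" unfolding MU ..
  finally have "similar_mat_wit M (diagr n l) U (mat_adjoint U)"
    unfolding similar_mat_wit_def using M U aU UU UU' by (auto simp: Let_def)
  hence "similar_mat M (diagr n l)" unfolding similar_mat_def by blast
  from char_poly_similar[OF this]
  have "char_poly M = char_poly (diagr n l)" .
  also have "\<dots> = (\<Prod>a\<leftarrow>diag_mat (diagr n l). [:-a,1:])"
    by (rule char_poly_upper_triangular[OF diagr_carrier], auto simp: upper_triangular_def diagr_def)
  also have "diag_mat (diagr n l) = map (\<lambda>i. complex_of_real (l i)) [0..<n]"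
    by (auto simp: diag_mat_def diagr_def)
  finally show ?thesis .
qed

lemma mset_linear_prod: fixes xs ys :: "complex list"
  assumes "(\<Prod>a\<leftarrow>xs. [:-a,1:]) = (\<Prod>a\<leftarrow>ys. [:-a,1:])"
  shows "mset xs = mset ys"
  using assms
proof (induct xs arbitrary: ys)
  case Nil
  hence one: "(\<Prod>a\<leftarrow>ys. [:-a,1:]) = 1" by simp
  show ?case
  proof (cases ys)
    case (Cons y ys')
    have "poly (\<Prod>a\<leftarrow>ys. [:-a,1:]) y = 0" unfolding Cons by simp
    thus ?thesis unfolding one by simp
  qed simp
next
  case (Cons x xs)
  have "poly (\<Prod>a\<leftarrow>ys. [:-a,1:]) x = 0" unfolding Cons(2)[symmetric] by simp
  hence "x \<in> set ys"
  proof (induct ys)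
    case (Cons y ys) thus ?case by auto
  qed simp
  then obtain ys1 ys2 where ys: "ys = ys1 @ x # ys2" by (meson split_list)
  have e1: "(\<Prod>a\<leftarrow>ys. [:-a,1:]) = [:-x,1:] * (\<Prod>a\<leftarrow>ys1 @ ys2. [:-a,1:])" unfolding ys
    by (simp only: map_append prod_list.append list.map prod_list.Cons mult.left_commute)
  have e2: "(\<Prod>a\<leftarrow>x # xs. [:-a,1:]) = [:-x,1:] * (\<Prod>a\<leftarrow>xs. [:-a,1:])"
    by (simp only: list.map prod_list.Cons)
  have "[:-x,1:] * (\<Prod>a\<leftarrow>xs. [:-a,1:]) = [:-x,1:] * (\<Prod>a\<leftarrow>ys1 @ ys2. [:-a,1:])"
    using Cons(2) unfolding e1 e2 .
  hence "(\<Prod>a\<leftarrow>xs. [:-a,1:]) = (\<Prod>a\<leftarrow>ys1 @ ys2. [:-a,1:])"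
    by (metis mult_left_cancel pCons_eq_0_iff zero_neq_one)
  from Cons(1)[OF this] show ?case unfolding ys by simp
qed

definition onb :: "nat \<Rightarrow> (nat \<Rightarrow> complex vec) \<Rightarrow> bool" where
  "onb n u \<longleftrightarrow> (\<forall>j<n. u j \<in> carrier_vec n) \<and> (\<forall>i<n. \<forall>j<n. ip (u i) (u j) = (if i = j then 1 else 0))"

lemma diag_perm: fixes M U :: "complex mat"
  assumes M: "M \<in> carrier_mat n n" and U: "U \<in> carrier_mat n n" and UU: "mat_adjoint U * U = 1\<^sub>m n"
    and MU: "M * U = U * diagr n l"
    and cp: "char_poly M = (\<Prod>w\<leftarrow>ws. [:- complex_of_real w, 1:])" and len: "length ws = n"
  shows "\<exists>p. p permutes {..<n} \<and> (\<forall>i<n. ws!i = l (p i))"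
proof -
  have "(\<Prod>a\<leftarrow>map complex_of_real ws. [:-a,1:]) = (\<Prod>a\<leftarrow>map (\<lambda>i. complex_of_real (l i)) [0..<n]. [:-a,1:])"
    using cp cp_diag[OF M U UU MU] by (simp add: o_def)
  from mset_linear_prod[OF this]
  have "image_mset Re (mset (map complex_of_real ws)) = image_mset Re (mset (map (\<lambda>i. complex_of_real (l i)) [0..<n]))"
    by simp
  hence ms: "mset ws = mset (map l [0..<n])" by (simp add: multiset.map_comp o_def)
  from mset_eq_permutation[OF ms] obtain p where p: "p permutes {..<length (map l [0..<n])}"
    and pl: "permute_list p (map l [0..<n]) = ws" by blast
  have "\<forall>i<n. ws!i = l (p i)"
  proof (intro allI impI)
    fix i assume i: "i < n"
    have "p i < n" using permutes_in_image[OF p] i by simp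
    thus "ws!i = l (p i)" unfolding pl[symmetric] using permute_list_nth[OF p] i by simp
  qed
  thus ?thesis using p by auto
qed

lemma onb_from_unitary: fixes M U :: "complex mat"
  assumes M: "M \<in> carrier_mat n n" and U: "U \<in> carrier_mat n n" and UU: "mat_adjoint U * U = 1\<^sub>m n"
    and MU: "M * U = U * diagr n l" and p: "p permutes {..<n}"
  shows "onb n (\<lambda>j. col U (p j)) \<and> (\<forall>j<n. M *\<^sub>v col U (p j) = complex_of_real (l (p j)) \<cdot>\<^sub>v col U (p j))"
proof -
  have pin: "j < n \<Longrightarrow> p j < n" for j using permutes_in_image[OF p] by simp
  have inj: "i < n \<Longrightarrow> j < n \<Longrightarrow> p i = p j \<longleftrightarrow> i = j" for i j
    using permutes_inj[OF p] by (auto dest: injD)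
  have "onb n (\<lambda>j. col U (p j))"
    unfolding onb_def
  proof (intro conjI allI impI)
    fix j assume "j < n" thus "col U (p j) \<in> carrier_vec n" using U by auto
  next
    fix i j assume ij: "i < n" "j < n"
    have "ip (col U (p i)) (col U (p j)) = (mat_adjoint U * U) $$ (p i, p j)"
      using adj_mult_index[OF U pin[OF ij(1)] pin[OF ij(2)]] by simp
    thus "ip (col U (p i)) (col U (p j)) = (if i = j then 1 else 0)" unfolding UU
      using pin ij inj by simp
  qed
  moreover have "\<forall>j<n. M *\<^sub>v col U (p j) = complex_of_real (l (p j)) \<cdot>\<^sub>v col U (p j)"
  proof (intro allI impI)
    fix j assume j: "j < n"
    have "M *\<^sub>v col U (p j) = col (M * U) (p j)" using col_mult2[OF M U pin[OF j]] by simp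
    also have "\<dots> = col (U * diagr n l) (p j)" unfolding MU ..
    also have "\<dots> = complex_of_real (l (p j)) \<cdot>\<^sub>v col U (p j)"
    proof (rule eq_vecI)
      fix i assume "i < dim_vec (complex_of_real (l (p j)) \<cdot>\<^sub>v col U (p j))"
      hence i: "i < n" using U by simp
      have "col (U * diagr n l) (p j) $ i = (U * diagr n l) $$ (i, p j)"
        by (rule index_col, insert U i pin[OF j], auto simp: diagr_def)
      thus "col (U * diagr n l) (p j) $ i = (complex_of_real (l (p j)) \<cdot>\<^sub>v col U (p j)) $ i"
        using mult_diagr_idx[OF U i pin[OF j]] U i pin[OF j] by (simp add: mult.commute)
    qed (insert U, auto simp: diagr_def)
    finally show "M *\<^sub>v col U (p j) = complex_of_real (l (p j)) \<cdot>\<^sub>v col U (p j)" .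
  qed
  ultimately show ?thesis by blast
qed

lemma eigen_sorted: fixes M :: "complex mat"
  assumes M: "M \<in> carrier_mat n n" and h: "mat_adjoint M = M" and sr: "sorted_real_eigenvalues M ws"
  shows "\<exists>u. onb n u \<and> (\<forall>j<n. M *\<^sub>v u j = complex_of_real (ws!j) \<cdot>\<^sub>v u j)"
proof -
  from hermitian_diag[OF M h] obtain U l where U: "U \<in> carrier_mat n n" and UU: "mat_adjoint U * U = 1\<^sub>m n"
    and MU: "M * U = U * diagr n l" by auto
  from sr M have cp: "char_poly M = (\<Prod>w\<leftarrow>ws. [:- complex_of_real w, 1:])" and len: "length ws = n"
    unfolding sorted_real_eigenvalues_def by auto
  from diag_perm[OF M U UU MU cp len] obtain p where p: "p permutes {..<n}" and pw: "\<forall>i<n. ws!i = l (p i)" by auto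
  from onb_from_unitary[OF M U UU MU p] pw show ?thesis by (intro exI[of _ "\<lambda>j. col U (p j)"], auto)
qed

lemma eigen_singular: fixes X :: "complex mat"
  assumes X: "X \<in> carrier_mat n n" and h: "mat_adjoint X = X"
    and psd: "\<And>v. v \<in> carrier_vec n \<Longrightarrow> Re (ip v (X *\<^sub>v v)) \<ge> 0"
    and sv: "singular_values X s"
  shows "\<exists>u. onb n u \<and> (\<forall>j<n. X *\<^sub>v u j = complex_of_real (s!j) \<cdot>\<^sub>v u j)"
proof -
  from hermitian_diag[OF X h] obtain U l where U: "U \<in> carrier_mat n n" and UU: "mat_adjoint U * U = 1\<^sub>m n"
    and XU: "X * U = U * diagr n l" by auto
  have XX: "X * X \<in> carrier_mat n n" using X by simp
  have "(X * X) * U = X * (X * U)" using assoc_mult_mat[OF X X U] .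
  also have "\<dots> = X * (U * diagr n l)" by (simp only: XU)
  also have "\<dots> = (X * U) * diagr n l" by (rule assoc_mult_mat[symmetric, OF X U diagr_carrier])
  also have "\<dots> = (U * diagr n l) * diagr n l" by (simp only: XU)
  also have "\<dots> = U * (diagr n l * diagr n l)" by (rule assoc_mult_mat[OF U diagr_carrier diagr_carrier])
  also have "diagr n l * diagr n l = diagr n (\<lambda>i. (l i)\<^sup>2)"
  proof (rule eq_matI)
    fix i j assume "i < dim_row (diagr n (\<lambda>i. (l i)\<^sup>2))" "j < dim_col (diagr n (\<lambda>i. (l i)\<^sup>2))"
    hence ij: "i < n" "j < n" by (auto simp: diagr_def)
    show "(diagr n l * diagr n l) $$ (i,j) = diagr n (\<lambda>i. (l i)\<^sup>2) $$ (i,j)"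
      unfolding mult_diagr_idx[OF diagr_carrier ij] using ij by (simp add: diagr_def power2_eq_square)
  qed (auto simp: diagr_def)
  finally have XXU: "X * X * U = U * diagr n (\<lambda>i. (l i)\<^sup>2)" .
  from sv X h have cp: "char_poly (X * X) = (\<Prod>w\<leftarrow>map (\<lambda>s. s\<^sup>2) s. [:- complex_of_real w, 1:])"
    and len: "length (map (\<lambda>s. s\<^sup>2) s) = n" and s0: "\<forall>x\<in>set s. x \<ge> 0"
    unfolding singular_values_def sorted_real_eigenvalues_def by auto
  from diag_perm[OF XX U UU XXU cp len] obtain p where p: "p permutes {..<n}"
    and pw: "\<forall>i<n. map (\<lambda>s. s\<^sup>2) s ! i = (l (p i))\<^sup>2" by auto
  from onb_from_unitary[OF X U UU XU p] have onb: "onb n (\<lambda>j. col U (p j))"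
    and ev: "\<forall>j<n. X *\<^sub>v col U (p j) = complex_of_real (l (p j)) \<cdot>\<^sub>v col U (p j)" by auto
  have "\<forall>j<n. s!j = l (p j)"
  proof (intro allI impI)
    fix j assume j: "j < n"
    have c: "col U (p j) \<in> carrier_vec n" and i1: "ip (col U (p j)) (col U (p j)) = 1"
      using onb j unfolding onb_def by auto
    have "Re (ip (col U (p j)) (X *\<^sub>v col U (p j))) \<ge> 0" using psd[OF c] .
    hence lp: "l (p j) \<ge> 0" unfolding ev[rule_format, OF j] ip_smult_right[OF c c] i1 by simp
    have sj: "s!j \<ge> 0" using s0 len j by auto
    have "(s!j)\<^sup>2 = (l (p j))\<^sup>2" using pw j len by auto
    thus "s!j = l (p j)" using lp sj by (simp add: power2_eq_iff_nonneg)
  qed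
  thus ?thesis using onb ev by (intro exI[of _ "\<lambda>j. col U (p j)"], auto)
qed




definition fnorm :: "complex mat \<Rightarrow> real" where
  "fnorm M = (\<Sum>i<dim_row M. \<Sum>j<dim_col M. cmod (M$$(i,j)))"

lemma comp_le_vnorm2: "j < dim_vec v \<Longrightarrow> cmod (v$j) \<le> vnorm2 v"
  unfolding vnorm2_L2 by (rule member_le_L2_set, auto)

lemma mv_bound: assumes M: "M \<in> carrier_mat n m" and v: "v \<in> carrier_vec m"
  shows "vnorm2 (M *\<^sub>v v) \<le> fnorm M * vnorm2 v"
proof -
  have "vnorm2 (M *\<^sub>v v) \<le> (\<Sum>i<n. \<bar>cmod ((M *\<^sub>v v)$i)\<bar>)"
    unfolding vnorm2_L2 using M L2_set_le_sum_abs[of "\<lambda>i. cmod ((M *\<^sub>v v)$i)" "{..<n}"] by simp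
  also have "\<dots> \<le> (\<Sum>i<n. \<Sum>j<m. cmod (M$$(i,j)) * vnorm2 v)"
  proof (rule sum_mono)
    fix i assume "i \<in> {..<n}"
    hence i: "i < n" by auto
    have "cmod ((M *\<^sub>v v)$i) = cmod (\<Sum>j<m. M$$(i,j) * v$j)"
      using M v i by (simp add: scalar_prod_def atLeast0LessThan)
    also have "\<dots> \<le> (\<Sum>j<m. cmod (M$$(i,j) * v$j))" by (rule norm_sum)
    also have "\<dots> \<le> (\<Sum>j<m. cmod (M$$(i,j)) * vnorm2 v)"
      by (rule sum_mono, insert v, auto simp: norm_mult intro!: mult_left_mono comp_le_vnorm2)
    finally show "\<bar>cmod ((M *\<^sub>v v)$i)\<bar> \<le> (\<Sum>j<m. cmod (M$$(i,j)) * vnorm2 v)" by simp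
  qed
  also have "\<dots> = fnorm M * vnorm2 v" unfolding fnorm_def using M by (simp add: sum_distrib_right)
  finally show ?thesis .
qed

lemma fnorm_adj: "fnorm (mat_adjoint M) = fnorm M"
  unfolding fnorm_def by (simp, subst sum.swap, simp)

lemma fnorm_bound: assumes "M \<in> carrier_mat n n" "\<And>i j. i < n \<Longrightarrow> j < n \<Longrightarrow> cmod (M$$(i,j)) \<le> b"
  shows "fnorm M \<le> real n * real n * b"
proof -
  have "fnorm M = (\<Sum>i<n. \<Sum>j<n. cmod (M$$(i,j)))" unfolding fnorm_def using assms(1) by simp
  also have "\<dots> \<le> (\<Sum>i<n. \<Sum>j<n. b)" by (intro sum_mono, rule assms(2), auto)
  finally have "fnorm M \<le> (\<Sum>i<n. \<Sum>j<n. b)" .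
  thus ?thesis by simp
qed

lemma smult_mat_vec: "M \<in> carrier_mat n m \<Longrightarrow> v \<in> carrier_vec m \<Longrightarrow> (c \<cdot>\<^sub>m M) *\<^sub>v v = c \<cdot>\<^sub>v (M *\<^sub>v (v :: complex vec))"
  by (rule eq_vecI, auto simp: scalar_prod_def sum_distrib_left algebra_simps intro!: sum.cong)

lemma pow_smult: assumes M: "(M :: complex mat) \<in> carrier_mat n n"
  shows "(a \<cdot>\<^sub>m M) ^\<^sub>m k = a^k \<cdot>\<^sub>m (M ^\<^sub>m k)"
proof (induct k)
  case 0 thus ?case using M by (auto intro!: eq_matI)
next
  case (Suc k)
  have "(a \<cdot>\<^sub>m M) ^\<^sub>m Suc k = (a^k \<cdot>\<^sub>m (M ^\<^sub>m k)) * (a \<cdot>\<^sub>m M)" using Suc by simp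
  also have "\<dots> = a \<cdot>\<^sub>m (a^k \<cdot>\<^sub>m (M ^\<^sub>m k * M))"
    using M by (simp add: mult_smult_assoc_mat[of _ n n _ n] mult_smult_distrib[of _ n n _ n])
  also have "\<dots> = a ^ Suc k \<cdot>\<^sub>m (M ^\<^sub>m Suc k)" by (rule eq_matI, auto)
  finally show ?case .
qed

lemma decay: fixes C :: "complex mat"
  assumes C: "C \<in> carrier_mat n n" and n: "n > 0" and ev: "\<And>z. eigenvalue C z \<Longrightarrow> cmod z < 1"
  shows "\<exists>c r. 0 < r \<and> r < 1 \<and> (\<forall>k i j. i < n \<longrightarrow> j < n \<longrightarrow> cmod ((C ^\<^sub>m k) $$ (i,j)) \<le> c * r^k)"
proof -
  define \<rho> where "\<rho> = spectral_radius C"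
  from spectral_radius_mem_max(1)[OF C n] obtain z where "z \<in> spectrum C" "\<rho> = cmod z" unfolding \<rho>_def by auto
  hence \<rho>1: "\<rho> < 1" and \<rho>0: "\<rho> \<ge> 0" using ev unfolding spectrum_def by auto
  define r where "r = (1 + \<rho>) / 2"
  have r: "0 < r" "r < 1" "\<rho> < r" using \<rho>1 \<rho>0 unfolding r_def by auto
  define C' where "C' = complex_of_real (1 / r) \<cdot>\<^sub>m C"
  have C': "C' \<in> carrier_mat n n" unfolding C'_def using C by simp
  have CC': "C = complex_of_real r \<cdot>\<^sub>m C'" unfolding C'_def using r
    by (auto intro!: eq_matI simp: of_real_def[symmetric]) 
  have "\<And>z. eigenvalue C' z \<Longrightarrow> cmod z < 1"
  proof -
    fix z assume "eigenvalue C' z"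
    then obtain v where "eigenvector C' v z" unfolding eigenvalue_def by auto
    hence v: "v \<in> carrier_vec n" "v \<noteq> 0\<^sub>v n" "C' *\<^sub>v v = z \<cdot>\<^sub>v v" using C' unfolding eigenvector_def by auto
    have "C *\<^sub>v v = (complex_of_real r * z) \<cdot>\<^sub>v v" unfolding CC' smult_mat_vec[OF C' v(1)] v(3) by (simp add: smult_smult_assoc)
    hence "eigenvalue C (complex_of_real r * z)" unfolding eigenvalue_def eigenvector_def using v C by auto
    hence "cmod (complex_of_real r * z) \<le> \<rho>"
      using spectral_radius_mem_max(2)[OF C n] unfolding \<rho>_def spectrum_def by auto
    hence "r * cmod z \<le> \<rho>" using r by (simp add: norm_mult)
    hence "r * cmod z < r * 1" using r by linarith
    thus "cmod z < 1" using r by (simp add: mult_less_cancel_left_pos)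
  qed
  hence "spectral_radius C' < 1"
    using spectral_radius_mem_max(1)[OF C' n] unfolding spectrum_def by auto
  from spectral_radius_jnf_norm_bound_less_1_upper_triangular[OF C' this]
  obtain c where c: "\<And>k. norm_bound (C' ^\<^sub>m k) c" by auto
  have "\<forall>k i j. i < n \<longrightarrow> j < n \<longrightarrow> cmod ((C ^\<^sub>m k) $$ (i,j)) \<le> c * r^k"
  proof (intro allI impI)
    fix k i j assume ij: "i < n" "j < n"
    have "(C ^\<^sub>m k) $$ (i,j) = complex_of_real (r^k) * (C' ^\<^sub>m k) $$ (i,j)"
      unfolding CC' pow_smult[OF C'] using ij C' by simp
    moreover have "cmod ((C' ^\<^sub>m k) $$ (i,j)) \<le> c" using c[of k] ij C' unfolding norm_bound_def by simp
    moreover have "cmod (complex_of_real r ^ k) = r^k" using r by (simp add: norm_power)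
    ultimately show "cmod ((C ^\<^sub>m k) $$ (i,j)) \<le> c * r^k" using r
      by (simp add: norm_mult mult.commute mult_left_mono)
  qed
  thus ?thesis using r by blast
qed

lemma limit_nonpos: fixes t K r :: real
  assumes r: "0 < r" "r < 1" and b: "\<And>k. t \<le> K * (r^k)\<^sup>2"
  shows "t \<le> 0"
proof (rule ccontr)
  assume "\<not> t \<le> 0"
  hence t: "t > 0" by simp
  have "norm r < 1" using r by simp
  from LIMSEQ_power_zero[OF this] have "(\<lambda>k. r^k) \<longlonglongrightarrow> 0" .
  hence "(\<lambda>k. (r^k)\<^sup>2) \<longlonglongrightarrow> 0\<^sup>2" by (rule tendsto_power)
  hence "(\<lambda>k. K * (r^k)\<^sup>2) \<longlonglongrightarrow> K * 0\<^sup>2" by (rule tendsto_mult_left)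
  hence "eventually (\<lambda>k. K * (r^k)\<^sup>2 < t) sequentially" using t by (intro order_tendstoD) auto
  then obtain k where "K * (r^k)\<^sup>2 < t" by (auto simp: eventually_sequentially)
  with b[of k] show False by simp
qed




lemma cayley_mod: fixes z :: complex
  assumes z: "z \<noteq> -1" and re: "Re ((z - 1) / (z + 1)) < 0"
  shows "cmod z < 1"
proof -
  have d: "(Re (z+1))\<^sup>2 + (Im (z+1))\<^sup>2 > 0"
  proof -
    have "z + 1 \<noteq> 0" using z by (metis add.inverse_unique add.commute)
    thus ?thesis by (simp add: complex_eq_iff sum_power2_gt_zero_iff)
  qed
  have "Re ((z - 1) / (z + 1)) = ((Re z)\<^sup>2 + (Im z)\<^sup>2 - 1) / ((Re (z+1))\<^sup>2 + (Im (z+1))\<^sup>2)"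
    unfolding Re_divide by (simp add: power2_eq_square algebra_simps)
  with re d have "(Re z)\<^sup>2 + (Im z)\<^sup>2 - 1 < 0" by (simp add: divide_less_0_iff)
  hence "(cmod z)\<^sup>2 < 1" by (simp add: cmod_power2)
  thus ?thesis by (simp add: power_less_one_iff abs_square_less_1)
qed

lemma ip_expand: assumes "a \<in> carrier_vec n" "b \<in> carrier_vec n" "u \<in> carrier_vec n" "w \<in> carrier_vec n"
  shows "ip (a - b) (u - w) = ip (a + b) (u + w) - 2 * (ip a w + ip b u)"
proof -
  have "ip (a - b) (u - w) = (\<Sum>i<n. cnj (a$i + b$i) * (u$i + w$i) - 2 * (cnj (a$i) * w$i + cnj (b$i) * u$i))"
    unfolding ip_def using assms by (auto intro!: sum.cong simp: algebra_simps)
  also have "\<dots> = ip (a + b) (u + w) - 2 * (ip a w + ip b u)"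
    unfolding ip_def using assms by (simp add: sum_subtractf sum_distrib_left sum.distrib)
  finally show ?thesis .
qed

lemma ip_unit: assumes M: "M \<in> carrier_mat n n" and ij: "i < n" "j < n"
  shows "ip (unit_vec n i) (M *\<^sub>v unit_vec n j) = M $$ (i,j)"
proof -
  have "ip (unit_vec n i) (M *\<^sub>v unit_vec n j) = (\<Sum>k\<in>{i}. cnj (unit_vec n i $ k) * (M *\<^sub>v unit_vec n j) $ k)"
    unfolding ip_def by (rule sum.mono_neutral_right, insert ij, auto simp: unit_vec_def)
  thus ?thesis using M ij by simp
qed

lemma smult_inv_cancel: "(c::complex) \<noteq> 0 \<Longrightarrow> (1 / c) \<cdot>\<^sub>m (c \<cdot>\<^sub>m M) = M"
  by (rule eq_matI, auto)

lemma lyap_herm_psd: fixes A X R :: "complex mat"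
  assumes A: "A \<in> carrier_mat n n" and stab: "stable_mat A" and X: "X \<in> carrier_mat n n"
    and R: "R \<in> carrier_mat n n" and hR: "mat_adjoint R = R"
    and Rpsd: "\<And>v. v \<in> carrier_vec n \<Longrightarrow> Re (ip v (R *\<^sub>v v)) \<ge> 0"
    and lyap: "A * X + X * mat_adjoint A = - R"
  shows "mat_adjoint X = X \<and> (\<forall>v \<in> carrier_vec n. Re (ip v (X *\<^sub>v v)) \<ge> 0)"
proof (cases "n = 0")
  case True
  show ?thesis using True X by (auto intro!: eq_matI simp: ip_def)
next
  case False
  hence n: "n > 0" by simp
  let ?I = "1\<^sub>m n :: complex mat"
  define N where "N = ?I - A"
  define P where "P = ?I + A"
  have N: "N \<in> carrier_mat n n" and P: "P \<in> carrier_mat n n" unfolding N_def P_def using A by auto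
  have aA: "mat_adjoint A \<in> carrier_mat n n" using A by simp
  have Nv: "v \<in> carrier_vec n \<Longrightarrow> N *\<^sub>v v = v - A *\<^sub>v v" for v
    unfolding N_def using A by (subst minus_mult_distrib_mat_vec[of _ n n], auto)
  have Pv: "v \<in> carrier_vec n \<Longrightarrow> P *\<^sub>v v = v + A *\<^sub>v v" for v
    unfolding P_def using A by (subst add_mult_distrib_mat_vec[of _ n n], auto)
  have detN: "det N \<noteq> 0"
  proof
    assume "det N = 0"
    then obtain v where v: "v \<in> carrier_vec n" "v \<noteq> 0\<^sub>v n" "N *\<^sub>v v = 0\<^sub>v n"
      using det_0_iff_vec_prod_zero_field[OF N] by auto
    have "A *\<^sub>v v = 1 \<cdot>\<^sub>v v"
    proof (rule eq_vecI)
      fix i assume i: "i < dim_vec (1 \<cdot>\<^sub>v v)"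
      have "(N *\<^sub>v v) $ i = 0" using v(3) i v by simp
      thus "(A *\<^sub>v v) $ i = (1 \<cdot>\<^sub>v v) $ i" unfolding Nv[OF v(1)] using i v A by simp
    qed (insert A v, auto)
    hence "eigenvalue A 1" unfolding eigenvalue_def eigenvector_def using v A by auto
    with stab show False unfolding stable_mat_def by auto
  qed
  define Q where "Q = (1 / det N) \<cdot>\<^sub>m adj_mat N"
  have Q: "Q \<in> carrier_mat n n" unfolding Q_def using adj_mat(1)[OF N] by simp
  have NQ: "N * Q = ?I" unfolding Q_def using adj_mat[OF N] detN
    by (simp add: mult_smult_distrib[OF N] smult_inv_cancel)
  have QN: "Q * N = ?I" unfolding Q_def using adj_mat[OF N] detN
    by (simp add: mult_smult_assoc_mat[OF _ N] smult_inv_cancel)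
  have aQ: "mat_adjoint Q \<in> carrier_mat n n" using Q by simp
  define C where "C = Q * P"
  have C: "C \<in> carrier_mat n n" unfolding C_def using Q P by simp
  define E where "E = mat_adjoint C"
  have E: "E \<in> carrier_mat n n" unfolding E_def using C by simp
  have evC: "cmod z < 1" if "eigenvalue C z" for z
  proof -
    from that obtain v where "eigenvector C v z" unfolding eigenvalue_def by auto
    hence v: "v \<in> carrier_vec n" "v \<noteq> 0\<^sub>v n" "C *\<^sub>v v = z \<cdot>\<^sub>v v" using C unfolding eigenvector_def by auto
    have "N *\<^sub>v (C *\<^sub>v v) = P *\<^sub>v v" unfolding C_def
      using assoc_mult_mat_vec[OF N Q, of "P *\<^sub>v v"] assoc_mult_mat_vec[OF Q P v(1)] NQ P v by simp
    hence eq: "v + A *\<^sub>v v = z \<cdot>\<^sub>v (v - A *\<^sub>v v)" unfolding v(3) Pv[OF v(1)]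
      using mult_mat_vec[OF N v(1)] Nv[OF v(1)] by simp
    have comp: "i < n \<Longrightarrow> v$i + (A *\<^sub>v v)$i = z * (v$i - (A *\<^sub>v v)$i)" for i
      using arg_cong[OF eq, of "\<lambda>x. x $ i"] A v by simp
    have z: "z \<noteq> -1"
    proof
      assume "z = -1"
      hence "\<forall>i<n. v$i = 0" using comp by (auto simp: algebra_simps)
      hence "v = 0\<^sub>v n" using v by (auto intro!: eq_vecI)
      with v show False by simp
    qed
    have z1: "z + 1 \<noteq> 0" using z by (metis add.inverse_unique add.commute)
    have "A *\<^sub>v v = ((z - 1) / (z + 1)) \<cdot>\<^sub>v v"
    proof (rule eq_vecI)
      fix i assume "i < dim_vec (((z - 1) / (z + 1)) \<cdot>\<^sub>v v)"
      hence i: "i < n" using v by simp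
      have "(A *\<^sub>v v)$i * (z + 1) = (z - 1) * v$i" using comp[OF i] by (simp add: algebra_simps)
      thus "(A *\<^sub>v v) $ i = (((z - 1) / (z + 1)) \<cdot>\<^sub>v v) $ i" using i v z1
        by (simp add: field_simps)
    qed (insert A v, auto)
    hence "eigenvalue A ((z - 1) / (z + 1))" unfolding eigenvalue_def eigenvector_def using v A by auto
    hence "Re ((z - 1) / (z + 1)) < 0" using stab unfolding stable_mat_def by auto
    from cayley_mod[OF z this] show ?thesis .
  qed
  from decay[OF C n evC] obtain c r where r: "0 < r" "r < 1"
    and cb: "\<And>k i j. i < n \<Longrightarrow> j < n \<Longrightarrow> cmod ((C ^\<^sub>m k) $$ (i,j)) \<le> c * r^k" by blast
  define Ek where "Ek k = mat_adjoint (C ^\<^sub>m k)" for k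
  have Ek: "Ek k \<in> carrier_mat n n" for k unfolding Ek_def using C by simp
  have fEk: "fnorm (Ek k) \<le> real n * real n * (c * r^k)" for k
    unfolding Ek_def fnorm_adj using cb C by (intro fnorm_bound[of _ n], auto)
  have EkS: "Ek (Suc k) *\<^sub>v x = E *\<^sub>v (Ek k *\<^sub>v x)" if x: "x \<in> carrier_vec n" for k x
  proof -
    have "Ek (Suc k) = E * Ek k" unfolding Ek_def E_def using adj_mult[of "C ^\<^sub>m k" n n C n] C by simp
    thus ?thesis using assoc_mult_mat_vec[OF E Ek x] by simp
  qed
  have Ekx: "x \<in> carrier_vec n \<Longrightarrow> Ek k *\<^sub>v x \<in> carrier_vec n" for k x using Ek[of k] by (rule mult_mat_vec_carrier)
  have EkB: "vnorm2 (Ek k *\<^sub>v x) \<le> real n * real n * c * r^k * vnorm2 x" if x: "x \<in> carrier_vec n" for k x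
  proof -
    have "vnorm2 (Ek k *\<^sub>v x) \<le> fnorm (Ek k) * vnorm2 x" by (rule mv_bound[OF Ek x])
    also have "\<dots> \<le> real n * real n * (c * r^k) * vnorm2 x"
      by (rule mult_right_mono[OF fEk vnorm2_nonneg])
    finally show ?thesis by (simp add: mult.assoc)
  qed
  have aN: "mat_adjoint N = ?I - mat_adjoint A" unfolding N_def using adj_minus[OF one_carrier_mat A] by simp
  have aP: "mat_adjoint P = ?I + mat_adjoint A" unfolding P_def using adj_add[OF one_carrier_mat A] by simp
  have aNaQ: "mat_adjoint N * mat_adjoint Q = ?I"
    using arg_cong[OF QN, of mat_adjoint] adj_mult[OF Q N] by simp
  have EaPQ: "E = mat_adjoint P * mat_adjoint Q" unfolding E_def C_def using adj_mult[OF Q P] .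
  have stein: "ip x (X *\<^sub>v y) = ip (E *\<^sub>v x) (X *\<^sub>v (E *\<^sub>v y)) + 2 * ip (mat_adjoint Q *\<^sub>v x) (R *\<^sub>v (mat_adjoint Q *\<^sub>v y))"
    if x: "x \<in> carrier_vec n" and y: "y \<in> carrier_vec n" for x y
  proof -
    define a where "a = mat_adjoint Q *\<^sub>v x"
    define c' where "c' = mat_adjoint Q *\<^sub>v y"
    have a: "a \<in> carrier_vec n" and c': "c' \<in> carrier_vec n" unfolding a_def c'_def using aQ x y by auto
    define b where "b = mat_adjoint A *\<^sub>v a"
    define d where "d = mat_adjoint A *\<^sub>v c'"
    have b: "b \<in> carrier_vec n" and d: "d \<in> carrier_vec n" unfolding b_def d_def using aA a c' by auto
    have xab: "x = a - b"
    proof -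
      have "x = (mat_adjoint N * mat_adjoint Q) *\<^sub>v x" unfolding aNaQ using x by simp
      also have "\<dots> = mat_adjoint N *\<^sub>v a" unfolding a_def using assoc_mult_mat_vec[OF adj_carrier[OF N] aQ x] by simp
      also have "\<dots> = a - b" unfolding aN b_def using minus_mult_distrib_mat_vec[OF one_carrier_mat aA a] a by simp
      finally show ?thesis .
    qed
    have ycd: "y = c' - d"
    proof -
      have "y = (mat_adjoint N * mat_adjoint Q) *\<^sub>v y" unfolding aNaQ using y by simp
      also have "\<dots> = mat_adjoint N *\<^sub>v c'" unfolding c'_def using assoc_mult_mat_vec[OF adj_carrier[OF N] aQ y] by simp
      also have "\<dots> = c' - d" unfolding aN d_def using minus_mult_distrib_mat_vec[OF one_carrier_mat aA c'] c' by simp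
      finally show ?thesis .
    qed
    have Exab: "E *\<^sub>v x = a + b" unfolding EaPQ a_def b_def
      using assoc_mult_mat_vec[OF adj_carrier[OF P] aQ x] add_mult_distrib_mat_vec[OF one_carrier_mat aA, of "mat_adjoint Q *\<^sub>v x"] aQ x
      by (simp add: aP)
    have Eycd: "E *\<^sub>v y = c' + d" unfolding EaPQ c'_def d_def
      using assoc_mult_mat_vec[OF adj_carrier[OF P] aQ y] add_mult_distrib_mat_vec[OF one_carrier_mat aA, of "mat_adjoint Q *\<^sub>v y"] aQ y
      by (simp add: aP)
    have Xc: "X *\<^sub>v c' \<in> carrier_vec n" and Xd: "X *\<^sub>v d \<in> carrier_vec n" using X c' d by auto
    have "ip x (X *\<^sub>v y) = ip (a - b) (X *\<^sub>v c' - X *\<^sub>v d)"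
      unfolding xab ycd using X c' d by (simp add: mult_minus_distrib_mat_vec)
    also have "\<dots> = ip (a + b) (X *\<^sub>v c' + X *\<^sub>v d) - 2 * (ip a (X *\<^sub>v d) + ip b (X *\<^sub>v c'))"
      by (rule ip_expand[OF a b Xc Xd])
    also have "ip (a + b) (X *\<^sub>v c' + X *\<^sub>v d) = ip (E *\<^sub>v x) (X *\<^sub>v (E *\<^sub>v y))"
      unfolding Exab Eycd using X c' d by (simp add: mult_add_distrib_mat_vec)
    also have "ip a (X *\<^sub>v d) + ip b (X *\<^sub>v c') = ip a ((A * X + X * mat_adjoint A) *\<^sub>v c')"
    proof -
      have 1: "ip a (X *\<^sub>v d) = ip a ((X * mat_adjoint A) *\<^sub>v c')" unfolding d_def using X aA c' by simp
      have "ip b (X *\<^sub>v c') = ip a (A *\<^sub>v (X *\<^sub>v c'))" unfolding b_def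
        using ip_mult[OF A a Xc] by simp
      also have "\<dots> = ip a ((A * X) *\<^sub>v c')" using A X c' by simp
      finally have 2: "ip b (X *\<^sub>v c') = ip a ((A * X) *\<^sub>v c')" .
      have "(A * X + X * mat_adjoint A) *\<^sub>v c' = (A * X) *\<^sub>v c' + (X * mat_adjoint A) *\<^sub>v c'"
        using A X aA c' by (simp add: add_mult_distrib_mat_vec[of _ n n])
      moreover have "A *\<^sub>v (X *\<^sub>v c') \<in> carrier_vec n" "X *\<^sub>v (mat_adjoint A *\<^sub>v c') \<in> carrier_vec n"
        using A Xc Xd unfolding d_def by auto
      ultimately show ?thesis unfolding 1 2 assoc_mult_mat_vec[OF X aA c'] assoc_mult_mat_vec[OF A X c']
        using a by (simp add: ip_add_right[of _ n] add.commute)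
    qed
    also have "\<dots> = - ip a (R *\<^sub>v c')" unfolding lyap using R c' a
      by (simp add: ip_def sum_negf)
    finally show ?thesis unfolding a_def c'_def by simp
  qed
  define g where "g x y = ip x (X *\<^sub>v y) - cnj (ip y (X *\<^sub>v x))" for x y
  have gE: "g x y = g (E *\<^sub>v x) (E *\<^sub>v y)" if x: "x \<in> carrier_vec n" and y: "y \<in> carrier_vec n" for x y
  proof -
    have ax: "mat_adjoint Q *\<^sub>v x \<in> carrier_vec n" and ay: "mat_adjoint Q *\<^sub>v y \<in> carrier_vec n" using aQ x y by auto
    have "cnj (ip (mat_adjoint Q *\<^sub>v y) (R *\<^sub>v (mat_adjoint Q *\<^sub>v x))) = ip (mat_adjoint Q *\<^sub>v x) (R *\<^sub>v (mat_adjoint Q *\<^sub>v y))"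
    proof -
      have "ip (mat_adjoint Q *\<^sub>v y) (R *\<^sub>v (mat_adjoint Q *\<^sub>v x)) = ip (R *\<^sub>v (mat_adjoint Q *\<^sub>v y)) (mat_adjoint Q *\<^sub>v x)"
        using ip_mult[OF R ay ax] hR by simp
      also have "\<dots> = cnj (ip (mat_adjoint Q *\<^sub>v x) (R *\<^sub>v (mat_adjoint Q *\<^sub>v y)))"
        by (rule ip_cnj, insert R ax ay Q, simp)
      finally show ?thesis by simp
    qed
    thus ?thesis unfolding g_def stein[OF x y] stein[OF y x] by simp
  qed
  have gEk: "g x y = g (Ek k *\<^sub>v x) (Ek k *\<^sub>v y)" if x: "x \<in> carrier_vec n" and y: "y \<in> carrier_vec n" for x y k
  proof (induct k)
    case 0 thus ?case unfolding Ek_def using x y C by simp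
  next
    case (Suc k) thus ?case unfolding EkS[OF x] EkS[OF y] using gE[OF Ekx[OF x] Ekx[OF y]] by simp
  qed
  have gB: "cmod (g u w) \<le> 2 * fnorm X * vnorm2 u * vnorm2 w" if u: "u \<in> carrier_vec n" and w: "w \<in> carrier_vec n" for u w
  proof -
    have 1: "cmod (ip u (X *\<^sub>v w)) \<le> vnorm2 u * (fnorm X * vnorm2 w)"
      using ip_cs[of u "X *\<^sub>v w"] u w X mv_bound[OF X w] vnorm2_nonneg[of u]
      by (auto intro: order.trans mult_left_mono)
    have 2: "cmod (ip w (X *\<^sub>v u)) \<le> vnorm2 w * (fnorm X * vnorm2 u)"
      using ip_cs[of w "X *\<^sub>v u"] u w X mv_bound[OF X u] vnorm2_nonneg[of w]
      by (auto intro: order.trans mult_left_mono)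
    have "cmod (g u w) \<le> cmod (ip u (X *\<^sub>v w)) + cmod (ip w (X *\<^sub>v u))"
      unfolding g_def using norm_triangle_ineq4[of "ip u (X *\<^sub>v w)" "cnj (ip w (X *\<^sub>v u))"] by simp
    thus ?thesis using 1 2 by (simp add: algebra_simps)
  qed
  have g0: "g x y = 0" if x: "x \<in> carrier_vec n" and y: "y \<in> carrier_vec n" for x y
  proof -
    have "cmod (g x y) \<le> 0"
    proof (rule limit_nonpos[OF r])
      fix k
      have "cmod (g x y) \<le> 2 * fnorm X * vnorm2 (Ek k *\<^sub>v x) * vnorm2 (Ek k *\<^sub>v y)"
        unfolding gEk[OF x y, of k] by (rule gB[OF Ekx[OF x] Ekx[OF y]])
      also have "\<dots> \<le> 2 * fnorm X * ((real n * real n * c * r^k * vnorm2 x) * (real n * real n * c * r^k * vnorm2 y))"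
      proof -
        have "0 \<le> fnorm X" unfolding fnorm_def by (simp add: sum_nonneg)
        moreover have "vnorm2 (Ek k *\<^sub>v x) * vnorm2 (Ek k *\<^sub>v y) \<le> (real n * real n * c * r^k * vnorm2 x) * (real n * real n * c * r^k * vnorm2 y)"
          by (rule mult_mono[OF EkB[OF x] EkB[OF y] order_trans[OF vnorm2_nonneg EkB[OF x]] vnorm2_nonneg])
        ultimately show ?thesis by (simp add: mult.assoc mult_left_mono)
      qed
      also have "\<dots> = (2 * fnorm X * (real n * real n * c)^2 * vnorm2 x * vnorm2 y) * (r^k)\<^sup>2"
        by (simp add: power2_eq_square algebra_simps)
      finally show "cmod (g x y) \<le> (2 * fnorm X * (real n * real n * c)^2 * vnorm2 x * vnorm2 y) * (r^k)\<^sup>2" .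
    qed
    thus ?thesis by simp
  qed
  have herm: "mat_adjoint X = X"
  proof (rule eq_matI)
    fix i j assume ij: "i < dim_row X" "j < dim_col X"
    hence ij: "i < n" "j < n" using X by auto
    have "g (unit_vec n i) (unit_vec n j) = 0" by (rule g0, auto)
    hence "X $$ (i,j) = cnj (X $$ (j,i))" unfolding g_def ip_unit[OF X ij] ip_unit[OF X ij(2) ij(1)] by simp
    thus "mat_adjoint X $$ (i,j) = X $$ (i,j)" using X ij by simp
  qed (insert X, auto)
  have fE: "Re (ip x (X *\<^sub>v x)) \<ge> Re (ip (E *\<^sub>v x) (X *\<^sub>v (E *\<^sub>v x)))" if x: "x \<in> carrier_vec n" for x
    using stein[OF x x] Rpsd[of "mat_adjoint Q *\<^sub>v x"] aQ x by simp
  have fEk: "Re (ip x (X *\<^sub>v x)) \<ge> Re (ip (Ek k *\<^sub>v x) (X *\<^sub>v (Ek k *\<^sub>v x)))" if x: "x \<in> carrier_vec n" for x k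
  proof (induct k)
    case 0 thus ?case unfolding Ek_def using x C by simp
  next
    case (Suc k) thus ?case unfolding EkS[OF x] using fE[OF Ekx[OF x, of k]] by simp
  qed
  have "Re (ip v (X *\<^sub>v v)) \<ge> 0" if v: "v \<in> carrier_vec n" for v
  proof -
    have "- Re (ip v (X *\<^sub>v v)) \<le> 0"
    proof (rule limit_nonpos[OF r])
      fix k
      let ?w = "Ek k *\<^sub>v v"
      have w: "?w \<in> carrier_vec n" using Ekx[OF v] .
      have "- Re (ip v (X *\<^sub>v v)) \<le> - Re (ip ?w (X *\<^sub>v ?w))" using fEk[OF v, of k] by simp
      also have "\<dots> \<le> cmod (ip ?w (X *\<^sub>v ?w))" using abs_Re_le_cmod[of "ip ?w (X *\<^sub>v ?w)"] by linarith
      also have "\<dots> \<le> vnorm2 ?w * (fnorm X * vnorm2 ?w)"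
        using ip_cs[of ?w "X *\<^sub>v ?w"] w X mv_bound[OF X w] vnorm2_nonneg[of ?w] Ek[of k]
        by (auto intro: order.trans mult_left_mono)
      also have "\<dots> = fnorm X * (vnorm2 ?w * vnorm2 ?w)" by simp
      also have "\<dots> \<le> fnorm X * ((real n * real n * c * r^k * vnorm2 v) * (real n * real n * c * r^k * vnorm2 v))"
      proof -
        have "0 \<le> fnorm X" unfolding fnorm_def by (simp add: sum_nonneg)
        moreover have "vnorm2 ?w * vnorm2 ?w \<le> (real n * real n * c * r^k * vnorm2 v) * (real n * real n * c * r^k * vnorm2 v)"
          by (rule mult_mono[OF EkB[OF v] EkB[OF v] order_trans[OF vnorm2_nonneg EkB[OF v]] vnorm2_nonneg])
        ultimately show ?thesis by (simp add: mult_left_mono)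
      qed
      also have "\<dots> = (fnorm X * (real n * real n * c)^2 * (vnorm2 v)^2) * (r^k)\<^sup>2"
        by (simp add: power2_eq_square algebra_simps)
      finally show "- Re (ip v (X *\<^sub>v v)) \<le> (fnorm X * (real n * real n * c)^2 * (vnorm2 v)^2) * (r^k)\<^sup>2" .
    qed
    thus ?thesis by simp
  qed
  with herm show ?thesis by blast
qed




definition lc :: "nat \<Rightarrow> nat set \<Rightarrow> (nat \<Rightarrow> complex) \<Rightarrow> (nat \<Rightarrow> complex vec) \<Rightarrow> complex vec" where
  "lc n J \<alpha> e = vec n (\<lambda>i. \<Sum>j\<in>J. \<alpha> j * e j $ i)"

lemma lc_carrier[simp]: "lc n J \<alpha> e \<in> carrier_vec n" unfolding lc_def by simp

lemma lc_mult: assumes M: "M \<in> carrier_mat n n" and e: "\<And>j. j \<in> J \<Longrightarrow> e j \<in> carrier_vec n"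
  and ev: "\<And>j. j \<in> J \<Longrightarrow> M *\<^sub>v e j = lam j \<cdot>\<^sub>v e j" and J: "finite J"
  shows "M *\<^sub>v lc n J \<alpha> e = lc n J (\<lambda>j. \<alpha> j * lam j) e"
proof (rule eq_vecI)
  fix i assume "i < dim_vec (lc n J (\<lambda>j. \<alpha> j * lam j) e)"
  hence i: "i < n" by (simp add: lc_def)
  have "(M *\<^sub>v lc n J \<alpha> e) $ i = (\<Sum>k<n. M$$(i,k) * (\<Sum>j\<in>J. \<alpha> j * e j $ k))"
    using M i by (simp add: lc_def scalar_prod_def atLeast0LessThan)
  also have "\<dots> = (\<Sum>j\<in>J. \<alpha> j * (\<Sum>k<n. M$$(i,k) * e j $ k))"
    by (simp add: sum_distrib_left sum_distrib_right algebra_simps, subst sum.swap, simp)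
  also have "\<dots> = (\<Sum>j\<in>J. \<alpha> j * (M *\<^sub>v e j) $ i)"
  proof (rule sum.cong[OF refl])
    fix j assume j: "j \<in> J"
    hence "dim_vec (e j) = n" using e by auto
    thus "\<alpha> j * (\<Sum>k<n. M$$(i,k) * e j $ k) = \<alpha> j * (M *\<^sub>v e j) $ i"
      using M i by (simp add: scalar_prod_def atLeast0LessThan)
  qed
  also have "\<dots> = (\<Sum>j\<in>J. \<alpha> j * lam j * e j $ i)"
  proof (rule sum.cong[OF refl])
    fix j assume j: "j \<in> J"
    have d: "dim_vec (e j) = n" using e j by auto
    show "\<alpha> j * (M *\<^sub>v e j) $ i = \<alpha> j * lam j * e j $ i" unfolding ev[OF j] using d i by simp
  qed
  finally show "(M *\<^sub>v lc n J \<alpha> e) $ i = lc n J (\<lambda>j. \<alpha> j * lam j) e $ i" using i by (simp add: lc_def)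
qed (insert M, auto simp: lc_def)

lemma lc_lin: "c \<cdot>\<^sub>v lc n J \<alpha> e - lc n J \<beta> e = lc n J (\<lambda>j. c * \<alpha> j - \<beta> j) e"
  by (rule eq_vecI, auto simp: lc_def sum_distrib_left sum_subtractf algebra_simps)

definition orthn :: "nat set \<Rightarrow> nat \<Rightarrow> (nat \<Rightarrow> complex vec) \<Rightarrow> bool" where
  "orthn J n e \<longleftrightarrow> (\<forall>j\<in>J. e j \<in> carrier_vec n) \<and> (\<forall>i\<in>J. \<forall>j\<in>J. ip (e i) (e j) = (if i = j then 1 else 0))"

lemma onb_orthn: "onb n e \<Longrightarrow> J \<subseteq> {..<n} \<Longrightarrow> orthn J n e"
  by (fastforce simp: onb_def orthn_def subset_iff)

lemma lc_ip: assumes o: "orthn J n e" and J: "finite J"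
  shows "ip (lc n J \<alpha> e) (lc n J \<beta> e) = (\<Sum>j\<in>J. cnj (\<alpha> j) * \<beta> j)"
proof -
  have "ip (lc n J \<alpha> e) (lc n J \<beta> e) = (\<Sum>k<n. (\<Sum>i\<in>J. cnj (\<alpha> i) * cnj (e i $ k)) * (\<Sum>j\<in>J. \<beta> j * e j $ k))"
    by (simp add: ip_def lc_def cnj_sum)
  also have "\<dots> = (\<Sum>i\<in>J. \<Sum>j\<in>J. cnj (\<alpha> i) * \<beta> j * (\<Sum>k<n. cnj (e i $ k) * e j $ k))"
    by (simp add: sum_distrib_left sum_distrib_right algebra_simps sum.swap[of _ "{..<n}"])
  also have "\<dots> = (\<Sum>i\<in>J. \<Sum>j\<in>J. cnj (\<alpha> i) * \<beta> j * (if i = j then 1 else 0))"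
  proof (intro sum.cong refl)
    fix i j assume ij: "i \<in> J" "j \<in> J"
    have d: "dim_vec (e i) = n" using o ij unfolding orthn_def by auto
    have "ip (e i) (e j) = (if i = j then 1 else 0)" using o ij unfolding orthn_def by auto
    hence "(\<Sum>k<n. cnj (e i $ k) * e j $ k) = (if i = j then 1 else 0)" unfolding ip_def d .
    thus "cnj (\<alpha> i) * \<beta> j * (\<Sum>k<n. cnj (e i $ k) * e j $ k) = cnj (\<alpha> i) * \<beta> j * (if i = j then 1 else 0)"
      by simp
  qed
  also have "\<dots> = (\<Sum>j\<in>J. cnj (\<alpha> j) * \<beta> j)"
    by (simp add: J if_distrib[of "\<lambda>x. _ * x"] sum.delta cong: if_cong)
  finally show ?thesis .
qed

lemma ip_lc_single: assumes o: "orthn J n e" and J: "finite J" and i: "i \<in> J"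
  shows "ip (e i) (lc n J \<alpha> e) = \<alpha> i"
proof -
  have "ip (e i) (lc n J \<alpha> e) = (\<Sum>k<n. cnj (e i $ k) * (\<Sum>j\<in>J. \<alpha> j * e j $ k))"
  proof -
    have "dim_vec (e i) = n" using o i unfolding orthn_def by auto
    thus ?thesis by (simp add: ip_def lc_def)
  qed
  also have "\<dots> = (\<Sum>j\<in>J. \<alpha> j * (\<Sum>k<n. cnj (e i $ k) * e j $ k))"
    by (simp add: sum_distrib_left sum_distrib_right algebra_simps sum.swap[of _ "{..<n}"])
  also have "\<dots> = (\<Sum>j\<in>J. \<alpha> j * (if i = j then 1 else 0))"
  proof (rule sum.cong[OF refl])
    fix j assume j: "j \<in> J"
    have d: "dim_vec (e i) = n" using o i unfolding orthn_def by auto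
    have "ip (e i) (e j) = (if i = j then 1 else 0)" using o i j unfolding orthn_def by auto
    hence "(\<Sum>k<n. cnj (e i $ k) * e j $ k) = (if i = j then 1 else 0)" unfolding ip_def d .
    thus "\<alpha> j * (\<Sum>k<n. cnj (e i $ k) * e j $ k) = \<alpha> j * (if i = j then 1 else 0)" by simp
  qed
  also have "\<dots> = \<alpha> i" using J i by (simp add: if_distrib[of "\<lambda>x. _ * x"] sum.delta cong: if_cong)
  finally show ?thesis .
qed




lemma sum_split_add: "(\<Sum>j<p+(q::nat). f j) = (\<Sum>j<p. f j) + (\<Sum>j<q. f (p + j))"
  by (induct q, auto simp: add.assoc)

lemma intersect: assumes oa: "orthn {..<p} n a" and ob: "orthn (g ` {..<q}) n b"
  and g: "inj_on g {..<q}" and pq: "p + q > n"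
  shows "\<exists>\<alpha> \<beta>. lc n {..<p} \<alpha> a = lc n (g ` {..<q}) \<beta> b \<and> lc n {..<p} \<alpha> a \<noteq> 0\<^sub>v n"
proof -
  define m where "m = p + q"
  define M where "M = mat m m (\<lambda>(i,j). if i < n then (if j < p then a j $ i else - (b (g (j - p)) $ i)) else (0::complex))"
  have M: "M \<in> carrier_mat m m" unfolding M_def by simp
  have m1: "m - 1 < m" "n \<le> m - 1" using pq unfolding m_def by auto
  have "M = mat\<^sub>r m m (\<lambda>i. if i = m - 1 then 0\<^sub>v m else row M i)"
    by (rule eq_matI, insert m1, auto simp: M_def)
  also have "det \<dots> = 0" by (rule det_row_0[OF m1(1)], insert M, auto)
  finally have "det M = 0" .
  then obtain c where c: "c \<in> carrier_vec m" "c \<noteq> 0\<^sub>v m" "M *\<^sub>v c = 0\<^sub>v m"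
    using det_0_iff_vec_prod_zero_field[OF M] by auto
  define \<alpha> where "\<alpha> j = c $ j" for j
  define \<beta> where "\<beta> l = c $ (p + the_inv_into {..<q} g l)" for l
  have \<beta>g: "j < q \<Longrightarrow> \<beta> (g j) = c $ (p + j)" for j unfolding \<beta>_def using the_inv_into_f_f[OF g] by auto
  have eq: "lc n {..<p} \<alpha> a = lc n (g ` {..<q}) \<beta> b"
  proof (rule eq_vecI)
    fix i assume "i < dim_vec (lc n (g ` {..<q}) \<beta> b)"
    hence i: "i < n" by (simp add: lc_def)
    hence im: "i < m" using m1 by auto
    have "0 = (M *\<^sub>v c) $ i" using c(3) im by simp
    also have "\<dots> = (\<Sum>j<m. M $$ (i,j) * c $ j)" using M c(1) im by (simp add: scalar_prod_def atLeast0LessThan)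
    also have "\<dots> = (\<Sum>j<p. M $$ (i,j) * c $ j) + (\<Sum>j<q. M $$ (i,p+j) * c $ (p+j))"
      unfolding m_def by (rule sum_split_add)
    also have "\<dots> = (\<Sum>j<p. \<alpha> j * a j $ i) + (\<Sum>j<q. - (\<beta> (g j) * b (g j) $ i))"
    proof -
      have 1: "(\<Sum>j<p. M $$ (i,j) * c $ j) = (\<Sum>j<p. \<alpha> j * a j $ i)"
      proof (rule sum.cong[OF refl])
        fix j assume "j \<in> {..<p}"
        hence j: "j < p" "j < m" by (auto simp: m_def)
        show "M $$ (i,j) * c $ j = \<alpha> j * a j $ i" using i im j by (simp add: M_def \<alpha>_def)
      qed
      have 2: "(\<Sum>j<q. M $$ (i,p+j) * c $ (p+j)) = (\<Sum>j<q. - (\<beta> (g j) * b (g j) $ i))"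
      proof (rule sum.cong[OF refl])
        fix j assume "j \<in> {..<q}"
        hence j: "j < q" "p + j < m" by (auto simp: m_def)
        show "M $$ (i,p+j) * c $ (p+j) = - (\<beta> (g j) * b (g j) $ i)" using i im j by (simp add: M_def \<beta>g)
      qed
      show ?thesis unfolding 1 2 ..
    qed
    also have "\<dots> = (\<Sum>j<p. \<alpha> j * a j $ i) - (\<Sum>j<q. \<beta> (g j) * b (g j) $ i)"
      by (simp add: sum_negf)
    also have "(\<Sum>j<q. \<beta> (g j) * b (g j) $ i) = (\<Sum>l\<in>g ` {..<q}. \<beta> l * b l $ i)"
      by (rule sum.reindex[OF g, symmetric, unfolded o_def])
    finally show "lc n {..<p} \<alpha> a $ i = lc n (g ` {..<q}) \<beta> b $ i" using i by (simp add: lc_def)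
  qed (simp add: lc_def)
  have nz: "lc n {..<p} \<alpha> a \<noteq> 0\<^sub>v n"
  proof
    assume z: "lc n {..<p} \<alpha> a = 0\<^sub>v n"
    have "c $ j = 0" if j: "j < p" for j
    proof -
      have d: "dim_vec (a j) = n" using oa j unfolding orthn_def by auto
      have "ip (a j) (lc n {..<p} \<alpha> a) = \<alpha> j" by (rule ip_lc_single[OF oa], auto simp: j)
      hence "ip (a j) (0\<^sub>v n) = c $ j" using z unfolding \<alpha>_def by simp
      moreover have "ip (a j) (0\<^sub>v n) = 0" using d by (simp add: ip_def)
      ultimately show ?thesis by simp
    qed
    moreover have "c $ (p + j) = 0" if j: "j < q" for j
    proof -
      have d: "dim_vec (b (g j)) = n" using ob j unfolding orthn_def by auto
      have "ip (b (g j)) (lc n (g ` {..<q}) \<beta> b) = \<beta> (g j)" by (rule ip_lc_single[OF ob], auto simp: j)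
      hence "ip (b (g j)) (0\<^sub>v n) = c $ (p + j)" using z eq \<beta>g[OF j] by simp
      moreover have "ip (b (g j)) (0\<^sub>v n) = 0" using d by (simp add: ip_def)
      ultimately show ?thesis by simp
    qed
    ultimately have "\<forall>j<m. c $ j = 0" unfolding m_def by (metis add_diff_inverse_nat nat_add_left_cancel_less)
    hence "c = 0\<^sub>v m" using c by (auto intro!: eq_vecI)
    with c show False by simp
  qed
  show ?thesis using eq nz by blast
qed

lemma spec_bdd: "bdd_above {vnorm2 (M *\<^sub>v v) | v. v \<in> carrier_vec (dim_col M) \<and> vnorm2 v \<le> 1}"
proof (rule bdd_aboveI)
  fix x assume "x \<in> {vnorm2 (M *\<^sub>v v) | v. v \<in> carrier_vec (dim_col M) \<and> vnorm2 v \<le> 1}"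
  then obtain v where v: "v \<in> carrier_vec (dim_col M)" "vnorm2 v \<le> 1" and x: "x = vnorm2 (M *\<^sub>v v)" by auto
  have f0: "fnorm M \<ge> 0" unfolding fnorm_def by (simp add: sum_nonneg)
  have "x \<le> fnorm M * vnorm2 v" unfolding x by (rule mv_bound[OF _ v(1)], auto)
  also have "\<dots> \<le> fnorm M * 1" by (rule mult_left_mono[OF v(2) f0])
  finally show "x \<le> fnorm M" by simp
qed

lemma spec_upper: assumes "v \<in> carrier_vec (dim_col M)" "vnorm2 v \<le> 1"
  shows "vnorm2 (M *\<^sub>v v) \<le> spec_norm M"
  unfolding spec_norm_def by (rule cSup_upper[OF _ spec_bdd], insert assms, auto)

lemma spec_nonneg: "spec_norm M \<ge> 0"
proof -
  have "vnorm2 (M *\<^sub>v 0\<^sub>v (dim_col M)) \<le> spec_norm M"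
    by (rule spec_upper, auto simp: vnorm2_def)
  thus ?thesis using vnorm2_nonneg order_trans by blast
qed

lemma spec_bound: assumes M: "M \<in> carrier_mat n m" and v: "v \<in> carrier_vec m"
  shows "vnorm2 (M *\<^sub>v v) \<le> spec_norm M * vnorm2 v"
proof (cases "vnorm2 v = 0")
  case True
  hence "v = 0\<^sub>v m" using vnorm2_zero_iff[of v] v by auto
  hence "M *\<^sub>v v = 0\<^sub>v n" using M by auto
  thus ?thesis using True vnorm2_zero_iff[of "0\<^sub>v n"] by simp
next
  case False
  hence pos: "vnorm2 v > 0" using vnorm2_nonneg[of v] by simp
  define u where "u = (1 / complex_of_real (vnorm2 v)) \<cdot>\<^sub>v v"
  have u: "u \<in> carrier_vec (dim_col M)" "vnorm2 u \<le> 1" unfolding u_def vnorm2_smult using v M pos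
    by (auto simp: norm_divide)
  have "vnorm2 (M *\<^sub>v u) = vnorm2 (M *\<^sub>v v) / vnorm2 v" unfolding u_def mult_mat_vec[OF M v] vnorm2_smult
    using pos by (simp add: norm_divide)
  with spec_upper[OF u] pos show ?thesis by (simp add: field_simps)
qed

lemma spec_pos: assumes A: "A \<in> carrier_mat n n" and n: "n > 0" and stab: "stable_mat A"
  shows "spec_norm A > 0"
proof -
  from spectrum_non_empty[OF A n] obtain z where "z \<in> spectrum A" by auto
  hence ev: "eigenvalue A z" unfolding spectrum_def by auto
  hence z: "z \<noteq> 0" using stab unfolding stable_mat_def by force
  from ev obtain v where "eigenvector A v z" unfolding eigenvalue_def by auto
  hence v: "v \<in> carrier_vec n" "v \<noteq> 0\<^sub>v n" "A *\<^sub>v v = z \<cdot>\<^sub>v v" using A unfolding eigenvector_def by auto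
  have pos: "vnorm2 v > 0" using v vnorm2_zero_iff[of v] vnorm2_nonneg[of v] by auto
  have "cmod z * vnorm2 v \<le> spec_norm A * vnorm2 v" using spec_bound[OF A v(1)] v(3) by (simp add: vnorm2_smult)
  hence "cmod z \<le> spec_norm A" using pos by simp
  moreover have "cmod z > 0" using z by simp
  ultimately show ?thesis by linarith
qed




lemma cnj_mult_self: "cnj z * z = complex_of_real ((cmod z)\<^sup>2)"
proof -
  have "(cmod z)\<^sup>2 = (Re z)\<^sup>2 + (Im z)\<^sup>2" by (rule cmod_power2)
  thus ?thesis by (simp add: complex_eq_iff power2_eq_square)
qed

lemma norm_sq_lc: assumes o: "orthn J n e" and J: "finite J"
  shows "(vnorm2 (lc n J \<alpha> e))\<^sup>2 = (\<Sum>j\<in>J. (cmod (\<alpha> j))\<^sup>2)"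
proof -
  have "complex_of_real ((vnorm2 (lc n J \<alpha> e))\<^sup>2) = (\<Sum>j\<in>J. cnj (\<alpha> j) * \<alpha> j)"
    using ip_self[of "lc n J \<alpha> e"] lc_ip[OF o J] by simp
  also have "\<dots> = complex_of_real (\<Sum>j\<in>J. (cmod (\<alpha> j))\<^sup>2)"
    unfolding cnj_mult_self by simp
  finally show ?thesis using of_real_eq_iff by blast
qed

lemma quad_lc: assumes M: "M \<in> carrier_mat n n" and o: "orthn J n e" and J: "finite J"
  and ev: "\<And>j. j \<in> J \<Longrightarrow> M *\<^sub>v e j = complex_of_real (lam j) \<cdot>\<^sub>v e j"
  shows "Re (ip (lc n J \<alpha> e) (M *\<^sub>v lc n J \<alpha> e)) = (\<Sum>j\<in>J. lam j * (cmod (\<alpha> j))\<^sup>2)"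
proof -
  have e: "\<And>j. j \<in> J \<Longrightarrow> e j \<in> carrier_vec n" using o unfolding orthn_def by auto
  have "M *\<^sub>v lc n J \<alpha> e = lc n J (\<lambda>j. \<alpha> j * complex_of_real (lam j)) e"
    by (rule lc_mult[OF M e ev J])
  hence "ip (lc n J \<alpha> e) (M *\<^sub>v lc n J \<alpha> e) = (\<Sum>j\<in>J. cnj (\<alpha> j) * (\<alpha> j * complex_of_real (lam j)))"
    using lc_ip[OF o J] by simp
  also have "\<dots> = (\<Sum>j\<in>J. complex_of_real (lam j) * (cnj (\<alpha> j) * \<alpha> j))"
    by (rule sum.cong, auto simp: algebra_simps)
  also have "\<dots> = complex_of_real (\<Sum>j\<in>J. lam j * (cmod (\<alpha> j))\<^sup>2)"
    unfolding cnj_mult_self by simp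
  finally show ?thesis by simp
qed

lemma y_bound: assumes X: "X \<in> carrier_mat n n" and o: "orthn J n e" and J: "finite J"
  and ev: "\<And>j. j \<in> J \<Longrightarrow> X *\<^sub>v e j = complex_of_real (s j) \<cdot>\<^sub>v e j"
  and b: "\<And>j. j \<in> J \<Longrightarrow> 0 \<le> s0 - s j \<and> s0 - s j \<le> d" and d: "d \<ge> 0"
  shows "vnorm2 (complex_of_real s0 \<cdot>\<^sub>v lc n J \<alpha> e - X *\<^sub>v lc n J \<alpha> e) \<le> d * vnorm2 (lc n J \<alpha> e)"
proof -
  have e: "\<And>j. j \<in> J \<Longrightarrow> e j \<in> carrier_vec n" using o unfolding orthn_def by auto
  have "complex_of_real s0 \<cdot>\<^sub>v lc n J \<alpha> e - X *\<^sub>v lc n J \<alpha> e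
     = lc n J (\<lambda>j. complex_of_real s0 * \<alpha> j - \<alpha> j * complex_of_real (s j)) e"
    using lc_mult[OF X e ev J] lc_lin[of "complex_of_real s0" n J \<alpha> e] by simp
  also have "\<dots> = lc n J (\<lambda>j. \<alpha> j * complex_of_real (s0 - s j)) e" by (simp add: algebra_simps)
  finally have y: "complex_of_real s0 \<cdot>\<^sub>v lc n J \<alpha> e - X *\<^sub>v lc n J \<alpha> e = lc n J (\<lambda>j. \<alpha> j * complex_of_real (s0 - s j)) e" .
  have "(vnorm2 (lc n J (\<lambda>j. \<alpha> j * complex_of_real (s0 - s j)) e))\<^sup>2 = (\<Sum>j\<in>J. (cmod (\<alpha> j))\<^sup>2 * (s0 - s j)\<^sup>2)"
    unfolding norm_sq_lc[OF o J] by (simp add: norm_mult power_mult_distrib del: of_real_diff)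
  also have "\<dots> \<le> (\<Sum>j\<in>J. (cmod (\<alpha> j))\<^sup>2 * d\<^sup>2)"
  proof (rule sum_mono)
    fix j assume "j \<in> J"
    from b[OF this] have "(s0 - s j)\<^sup>2 \<le> d\<^sup>2" by (intro power_mono) auto
    thus "(cmod (\<alpha> j))\<^sup>2 * (s0 - s j)\<^sup>2 \<le> (cmod (\<alpha> j))\<^sup>2 * d\<^sup>2" by (intro mult_left_mono) auto
  qed
  also have "\<dots> = (d * vnorm2 (lc n J \<alpha> e))\<^sup>2" unfolding power_mult_distrib norm_sq_lc[OF o J]
    by (simp add: sum_distrib_left mult.commute)
  finally have "(vnorm2 (lc n J (\<lambda>j. \<alpha> j * complex_of_real (s0 - s j)) e))\<^sup>2 \<le> (d * vnorm2 (lc n J \<alpha> e))\<^sup>2" .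
  hence "vnorm2 (lc n J (\<lambda>j. \<alpha> j * complex_of_real (s0 - s j)) e) \<le> d * vnorm2 (lc n J \<alpha> e)"
    by (rule power2_le_imp_le, insert d vnorm2_nonneg, simp)
  thus ?thesis unfolding y .
qed

lemma final_arith: fixes a s0 sm sk b w :: real
  assumes a: "a > 0" and s0: "s0 > 0" and up: "s0 * w \<le> a * (s0 - sm)"
    and lo: "s0 * w \<ge> - a * (s0 - sk) - b\<^sup>2 / 2"
  shows "sk / s0 - 1 - b\<^sup>2 / (2 * s0 * a) \<le> w / a \<and> w / a \<le> 1 - sm / s0"
proof
  have "w / a \<le> (s0 - sm) / s0"
    using up a s0 by (simp add: divide_le_eq le_divide_eq mult.commute)
  also have "\<dots> = 1 - sm / s0" using s0 by (simp add: diff_divide_distrib)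
  finally show "w / a \<le> 1 - sm / s0" .
next
  have "(- a * (s0 - sk) - b\<^sup>2 / 2) / (s0 * a) \<le> w / a"
    using lo a s0 by (simp add: divide_le_eq le_divide_eq mult.commute mult.left_commute)
  moreover have "(- a * (s0 - sk) - b\<^sup>2 / 2) / (s0 * a) = sk / s0 - 1 - b\<^sup>2 / (2 * s0 * a)"
    using a s0 by (simp add: field_simps)
  ultimately show "sk / s0 - 1 - b\<^sup>2 / (2 * s0 * a) \<le> w / a" by simp
qed




lemma ip_uminus_right: "dim_vec y = dim_vec x \<Longrightarrow> ip x (- y) = - ip x y"
  by (simp add: ip_def sum_negf)

theorem theorem5p1:
  fixes A B X :: "complex mat" and n r :: nat and s \<omega> :: "real list"
  assumes A: "A \<in> carrier_mat n n" and B: "B \<in> carrier_mat n r" and X: "X \<in> carrier_mat n n"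
    and stab: "stable_mat A"
    and ctrl: "controllable A B"
    and lyap: "A * X + X * mat_adjoint A = - (B * mat_adjoint B)"
    and sv: "singular_values X s"
    and ev: "sorted_real_eigenvalues ((1/2 :: complex) \<cdot>\<^sub>m (A + mat_adjoint A)) \<omega>"
  shows "\<forall>k\<in>{1..n}.
     s ! (k - 1) / s ! 0 - 1 - (spec_norm B)\<^sup>2 / (2 * s ! 0 * spec_norm A) \<le> \<omega> ! (k - 1) / spec_norm A
   \<and> \<omega> ! (k - 1) / spec_norm A \<le> 1 - s ! (n - k) / s ! 0"
proof (cases "n = 0")
  case True thus ?thesis by simp
next
  case False
  hence n: "n > 0" by simp
  have aA: "mat_adjoint A \<in> carrier_mat n n" using A by simp
  have aB: "mat_adjoint B \<in> carrier_mat r n" using B by simp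
  define R where "R = B * mat_adjoint B"
  have R: "R \<in> carrier_mat n n" unfolding R_def using B aB by simp
  have hR: "mat_adjoint R = R" unfolding R_def using adj_mult[OF B aB] by simp
  have ipB: "ip v (R *\<^sub>v v) = complex_of_real ((vnorm2 (mat_adjoint B *\<^sub>v v))\<^sup>2)" if v: "v \<in> carrier_vec n" for v
  proof -
    have "ip v (R *\<^sub>v v) = ip v (B *\<^sub>v (mat_adjoint B *\<^sub>v v))" unfolding R_def using assoc_mult_mat_vec[OF B aB v] by simp
    also have "\<dots> = ip (mat_adjoint B *\<^sub>v v) (mat_adjoint B *\<^sub>v v)"
      using ip_mult[OF B v, of "mat_adjoint B *\<^sub>v v"] aB v by simp
    also have "\<dots> = complex_of_real ((vnorm2 (mat_adjoint B *\<^sub>v v))\<^sup>2)" by (rule ip_self)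
    finally show ?thesis .
  qed
  have Rpsd: "\<And>v. v \<in> carrier_vec n \<Longrightarrow> Re (ip v (R *\<^sub>v v)) \<ge> 0" using ipB by simp
  have lyap': "A * X + X * mat_adjoint A = - R" using lyap unfolding R_def .
  from lyap_herm_psd[OF A stab X R hR Rpsd lyap'] have hX: "mat_adjoint X = X"
    and psd: "\<And>v. v \<in> carrier_vec n \<Longrightarrow> Re (ip v (X *\<^sub>v v)) \<ge> 0" by auto
  from eigen_singular[OF X hX psd sv] obtain u where ou: "onb n u"
    and evu: "\<And>j. j < n \<Longrightarrow> X *\<^sub>v u j = complex_of_real (s!j) \<cdot>\<^sub>v u j" by auto
  define H where "H = (1/2 :: complex) \<cdot>\<^sub>m (A + mat_adjoint A)"
  have H: "H \<in> carrier_mat n n" unfolding H_def using A by simp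
  have hH: "mat_adjoint H = H"
    unfolding H_def adj_smult adj_add[OF A aA] adj_adj using comm_add_mat[OF A aA] by simp
  from eigen_sorted[OF H hH ev[folded H_def]] obtain w where ow: "onb n w"
    and evw: "\<And>j. j < n \<Longrightarrow> H *\<^sub>v w j = complex_of_real (\<omega>!j) \<cdot>\<^sub>v w j" by auto
  from sv X have lens: "length s = n" and s0: "\<And>j. j < n \<Longrightarrow> s!j \<ge> 0"
    and ssort: "sorted_wrt (\<ge>) (map (\<lambda>s. s\<^sup>2) s)"
    unfolding singular_values_def sorted_real_eigenvalues_def by auto
  from ev A have lenw: "length \<omega> = n" and wsort: "sorted_wrt (\<ge>) \<omega>"
    unfolding sorted_real_eigenvalues_def by auto
  have smono: "s!j \<le> s!i" if ij: "i \<le> j" "j < n" for i j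
  proof (cases "i = j")
    case False
    hence lt: "i < j" using ij by simp
    have all: "\<forall>i j. i < j \<and> j < length (map (\<lambda>s. s\<^sup>2) s) \<longrightarrow> (map (\<lambda>s. s\<^sup>2) s)!j \<le> (map (\<lambda>s. s\<^sup>2) s)!i"
      using ssort unfolding sorted_wrt_iff_nth_less by blast
    have "(map (\<lambda>s. s\<^sup>2) s)!j \<le> (map (\<lambda>s. s\<^sup>2) s)!i" using all lt ij lens by simp
    hence sq: "(s!j)\<^sup>2 \<le> (s!i)\<^sup>2" using lt ij lens by simp
    have si: "0 \<le> s!i" using s0 lt ij by simp
    from power2_le_imp_le[OF sq si] show ?thesis .
  qed simp
  have wmono: "\<omega>!j \<le> \<omega>!i" if ij: "i \<le> j" "j < n" for i j
  proof (cases "i = j")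
    case False
    hence lt: "i < j" using ij by simp
    have all: "\<forall>i j. i < j \<and> j < length \<omega> \<longrightarrow> \<omega>!j \<le> \<omega>!i"
      using wsort unfolding sorted_wrt_iff_nth_less by blast
    thus ?thesis using lt ij lenw by simp
  qed simp
  define a where "a = spec_norm A"
  define b where "b = spec_norm B"
  have a: "a > 0" unfolding a_def by (rule spec_pos[OF A n stab])
  have b: "b \<ge> 0" unfolding b_def by (rule spec_nonneg)
  define s0 where "s0 = s!0"
  have s00: "s0 \<ge> 0" unfolding s0_def using s0 n by auto
  define y where "y v = complex_of_real s0 \<cdot>\<^sub>v v - X *\<^sub>v v" for v
  have y: "v \<in> carrier_vec n \<Longrightarrow> y v \<in> carrier_vec n" for v unfolding y_def using X by auto
  have I1: "2 * s0 * Re (ip v (A *\<^sub>v v)) = 2 * Re (ip v (A *\<^sub>v y v)) - (vnorm2 (mat_adjoint B *\<^sub>v v))\<^sup>2"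
    if v: "v \<in> carrier_vec n" for v
  proof -
    define z where "z = ip v (A *\<^sub>v (X *\<^sub>v v))"
    have Xv: "X *\<^sub>v v \<in> carrier_vec n" and aAv: "mat_adjoint A *\<^sub>v v \<in> carrier_vec n" using X aA v by auto
    have "(A * X + X * mat_adjoint A) *\<^sub>v v = (- R) *\<^sub>v v" unfolding lyap' ..
    also have "\<dots> = - (R *\<^sub>v v)" using R v by simp
    finally have e1: "A *\<^sub>v (X *\<^sub>v v) + X *\<^sub>v (mat_adjoint A *\<^sub>v v) = - (R *\<^sub>v v)"
      using A X aA v by (simp add: add_mult_distrib_mat_vec[of _ n n])
    have "ip v (A *\<^sub>v (X *\<^sub>v v)) + ip v (X *\<^sub>v (mat_adjoint A *\<^sub>v v)) = - ip v (R *\<^sub>v v)"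
      using arg_cong[OF e1, of "ip v"] ip_add_right[of "A *\<^sub>v (X *\<^sub>v v)" n "X *\<^sub>v (mat_adjoint A *\<^sub>v v)" v]
        A X aA v ip_uminus_right[of "R *\<^sub>v v" v] R by simp
    moreover have "ip v (X *\<^sub>v (mat_adjoint A *\<^sub>v v)) = cnj z"
    proof -
      have "ip v (X *\<^sub>v (mat_adjoint A *\<^sub>v v)) = ip (X *\<^sub>v v) (mat_adjoint A *\<^sub>v v)"
        using ip_mult[OF X v aAv] hX by simp
      also have "\<dots> = cnj (ip (mat_adjoint A *\<^sub>v v) (X *\<^sub>v v))" by (rule ip_cnj, insert A X, simp)
      also have "ip (mat_adjoint A *\<^sub>v v) (X *\<^sub>v v) = z" unfolding z_def using ip_mult[OF A v Xv] by simp
      finally show ?thesis .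
    qed
    ultimately have "z + cnj z = - complex_of_real ((vnorm2 (mat_adjoint B *\<^sub>v v))\<^sup>2)"
      unfolding z_def using ipB[OF v] by simp
    hence zre: "2 * Re z = - (vnorm2 (mat_adjoint B *\<^sub>v v))\<^sup>2"
      using arg_cong[of _ _ Re] by (metis Re_complex_of_real complex_add_cnj uminus_complex.sel(1) mult_2)
    have "A *\<^sub>v y v = complex_of_real s0 \<cdot>\<^sub>v (A *\<^sub>v v) - A *\<^sub>v (X *\<^sub>v v)"
      unfolding y_def using A X v by (simp add: mult_minus_distrib_mat_vec[of _ n n] mult_mat_vec[of _ n n])
    hence "ip v (A *\<^sub>v y v) = complex_of_real s0 * ip v (A *\<^sub>v v) - z"
      unfolding z_def using A X v by (simp add: ip_minus_right[of _ n] ip_smult_right[of _ n])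
    hence "Re (ip v (A *\<^sub>v y v)) = s0 * Re (ip v (A *\<^sub>v v)) - Re z" by simp
    with zre show ?thesis by simp
  qed
  have I2: "Re (ip v (H *\<^sub>v v)) = Re (ip v (A *\<^sub>v v))" if v: "v \<in> carrier_vec n" for v
  proof -
    have Av: "A *\<^sub>v v \<in> carrier_vec n" and aAv: "mat_adjoint A *\<^sub>v v \<in> carrier_vec n"
      using mult_mat_vec_carrier[OF A v] mult_mat_vec_carrier[OF aA v] by auto
    have "H *\<^sub>v v = (1/2 :: complex) \<cdot>\<^sub>v (A *\<^sub>v v + mat_adjoint A *\<^sub>v v)"
      unfolding H_def using smult_mat_vec[of "A + mat_adjoint A" n n v "1/2"] A aA v
      by (simp add: add_mult_distrib_mat_vec[of _ n n])
    hence "ip v (H *\<^sub>v v) = (1/2) * (ip v (A *\<^sub>v v) + ip v (mat_adjoint A *\<^sub>v v))"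
      using Av aAv v by (simp add: ip_smult_right[of _ n] ip_add_right[of _ n])
    moreover have "ip v (mat_adjoint A *\<^sub>v v) = cnj (ip v (A *\<^sub>v v))"
    proof -
      have "ip v (mat_adjoint A *\<^sub>v v) = ip (A *\<^sub>v v) v" using ip_mult[OF aA v v] by simp
      also have "\<dots> = cnj (ip v (A *\<^sub>v v))" by (rule ip_cnj, insert A v, simp)
      finally show ?thesis .
    qed
    ultimately have "ip v (H *\<^sub>v v) = (1/2) * (ip v (A *\<^sub>v v) + cnj (ip v (A *\<^sub>v v)))" by simp
    also have "\<dots> = complex_of_real (Re (ip v (A *\<^sub>v v)))" by (simp add: complex_add_cnj)
    finally show ?thesis by simp
  qed
  have I3: "cmod (ip v (A *\<^sub>v z)) \<le> vnorm2 v * (a * vnorm2 z)" if v: "v \<in> carrier_vec n" and z: "z \<in> carrier_vec n" for v z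
  proof -
    have "cmod (ip v (A *\<^sub>v z)) \<le> vnorm2 v * vnorm2 (A *\<^sub>v z)" by (rule ip_cs, insert A v z, simp)
    also have "\<dots> \<le> vnorm2 v * (a * vnorm2 z)" unfolding a_def
      by (rule mult_left_mono[OF spec_bound[OF A z] vnorm2_nonneg])
    finally show ?thesis .
  qed
  have I4: "(vnorm2 (mat_adjoint B *\<^sub>v v))\<^sup>2 \<le> (b * vnorm2 v)\<^sup>2" if v: "v \<in> carrier_vec n" for v
  proof -
    define t where "t = vnorm2 (mat_adjoint B *\<^sub>v v)"
    have t0: "t \<ge> 0" unfolding t_def by (rule vnorm2_nonneg)
    have "t\<^sup>2 = Re (ip v (R *\<^sub>v v))" unfolding t_def using ipB[OF v] by simp
    also have "\<dots> \<le> cmod (ip v (R *\<^sub>v v))" by (rule complex_Re_le_cmod)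
    also have "ip v (R *\<^sub>v v) = ip v (B *\<^sub>v (mat_adjoint B *\<^sub>v v))" unfolding R_def using assoc_mult_mat_vec[OF B aB v] by simp
    also have "cmod \<dots> \<le> vnorm2 v * vnorm2 (B *\<^sub>v (mat_adjoint B *\<^sub>v v))" by (rule ip_cs, insert B aB v, simp)
    also have "\<dots> \<le> vnorm2 v * (b * t)" unfolding b_def t_def
      by (rule mult_left_mono[OF spec_bound[OF B] vnorm2_nonneg], insert aB v, simp)
    finally have tt: "t * t \<le> t * (b * vnorm2 v)" by (simp add: power2_eq_square algebra_simps)
    have "t \<le> b * vnorm2 v"
    proof (cases "t = 0")
      case True thus ?thesis using b vnorm2_nonneg[of v] by simp
    next
      case False thus ?thesis using tt t0 by simp
    qed
    thus ?thesis unfolding t_def using t0 unfolding t_def by (intro power_mono) auto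
  qed
  show ?thesis
  proof (intro ballI)
    fix k assume "k \<in> {1..n}"
    hence k: "1 \<le> k" "k \<le> n" by auto
    define i where "i = k - 1"
    have i: "i < n" "k = Suc i" using k unfolding i_def by auto
    have upper: "s0 * \<omega>!i \<le> a * (s0 - s!(n-k))"
    proof -
      have ow': "orthn {..<k} n w" by (rule onb_orthn[OF ow], insert k, auto)
      have ou': "orthn (id ` {..<n-k+1}) n u" by (rule onb_orthn[OF ou], insert k, auto)
      from intersect[OF ow' ou' inj_on_id] k obtain \<alpha> \<beta> where
        eq: "lc n {..<k} \<alpha> w = lc n (id ` {..<n-k+1}) \<beta> u" and nz: "lc n {..<k} \<alpha> w \<noteq> 0\<^sub>v n" by auto
      define V where "V = lc n {..<k} \<alpha> w"
      have V: "V \<in> carrier_vec n" unfolding V_def by simp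
      define N where "N = (vnorm2 V)\<^sup>2"
      have N: "N > 0" unfolding N_def using nz vnorm2_zero_iff[of V] vnorm2_nonneg[of V] V
        unfolding V_def by auto
      have hU: "\<omega>!i * N \<le> Re (ip V (H *\<^sub>v V))"
      proof -
        have "Re (ip V (H *\<^sub>v V)) = (\<Sum>j<k. \<omega>!j * (cmod (\<alpha> j))\<^sup>2)"
          unfolding V_def by (rule quad_lc[OF H ow'], insert evw k, auto)
        also have "\<dots> \<ge> (\<Sum>j<k. \<omega>!i * (cmod (\<alpha> j))\<^sup>2)"
          by (rule sum_mono, rule mult_right_mono, insert wmono i, auto)
        also have "(\<Sum>j<k. \<omega>!i * (cmod (\<alpha> j))\<^sup>2) = \<omega>!i * N"
          unfolding N_def V_def norm_sq_lc[OF ow' finite_lessThan] by (simp add: sum_distrib_left)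
        finally show ?thesis .
      qed
      have yU: "vnorm2 (y V) \<le> (s0 - s!(n-k)) * vnorm2 V"
        unfolding y_def V_def eq
      proof (rule y_bound[OF X ou'])
        show "finite (id ` {..<n-k+1})" by simp
      next
        fix j assume "j \<in> id ` {..<n-k+1}"
        hence j: "j < n" using k by auto
        show "X *\<^sub>v u j = complex_of_real (s!j) \<cdot>\<^sub>v u j" by (rule evu[OF j])
      next
        fix j assume "j \<in> id ` {..<n-k+1}"
        hence j: "j \<le> n - k" "j < n" using k by auto
        show "0 \<le> s0 - s!j \<and> s0 - s!j \<le> s0 - s!(n-k)"
          using smono[of 0 j] smono[of j "n-k"] j k unfolding s0_def by auto
      next
        show "0 \<le> s0 - s!(n-k)" using smono[of 0 "n-k"] k unfolding s0_def by auto
      qed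
      have "2 * s0 * Re (ip V (A *\<^sub>v V)) \<le> 2 * Re (ip V (A *\<^sub>v y V))" using I1[OF V] by simp
      also have "\<dots> \<le> 2 * cmod (ip V (A *\<^sub>v y V))" using complex_Re_le_cmod by simp
      also have "\<dots> \<le> 2 * (vnorm2 V * (a * vnorm2 (y V)))" using I3[OF V y[OF V]] by simp
      also have "\<dots> \<le> 2 * (vnorm2 V * (a * ((s0 - s!(n-k)) * vnorm2 V)))"
        using yU a vnorm2_nonneg[of V] by (simp add: mult_left_mono)
      also have "\<dots> = 2 * (a * (s0 - s!(n-k)) * N)" unfolding N_def by (simp add: power2_eq_square algebra_simps)
      finally have "s0 * Re (ip V (H *\<^sub>v V)) \<le> a * (s0 - s!(n-k)) * N" unfolding I2[OF V] by simp
      moreover have "s0 * (\<omega>!i * N) \<le> s0 * Re (ip V (H *\<^sub>v V))" by (rule mult_left_mono[OF hU s00])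
      ultimately have "(s0 * \<omega>!i) * N \<le> (a * (s0 - s!(n-k))) * N" by (simp add: algebra_simps)
      thus ?thesis using N by simp
    qed
    have lower: "s0 * \<omega>!i \<ge> - a * (s0 - s!i) - b\<^sup>2 / 2"
    proof -
      define g where "g j = i + j" for j
      define q where "q = n - i"
      have g: "inj_on g {..<q}" unfolding g_def by (auto simp: inj_on_def)
      have gq: "g ` {..<q} \<subseteq> {..<n}" unfolding g_def q_def using i by auto
      have ou': "orthn {..<k} n u" by (rule onb_orthn[OF ou], insert k, auto)
      have ow': "orthn (g ` {..<q}) n w" by (rule onb_orthn[OF ow gq])
      from intersect[OF ou' ow' g] k i obtain \<alpha> \<beta> where
        eq: "lc n {..<k} \<alpha> u = lc n (g ` {..<q}) \<beta> w" and nz: "lc n {..<k} \<alpha> u \<noteq> 0\<^sub>v n"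
        unfolding q_def by auto
      define V where "V = lc n {..<k} \<alpha> u"
      have V: "V \<in> carrier_vec n" unfolding V_def by simp
      define N where "N = (vnorm2 V)\<^sup>2"
      have N: "N > 0" unfolding N_def using nz vnorm2_zero_iff[of V] vnorm2_nonneg[of V] V
        unfolding V_def by auto
      have hL: "Re (ip V (H *\<^sub>v V)) \<le> \<omega>!i * N"
      proof -
        have "Re (ip V (H *\<^sub>v V)) = (\<Sum>j\<in>g ` {..<q}. \<omega>!j * (cmod (\<beta> j))\<^sup>2)"
          unfolding V_def eq by (rule quad_lc[OF H ow'], insert evw gq, auto)
        also have "\<dots> \<le> (\<Sum>j\<in>g ` {..<q}. \<omega>!i * (cmod (\<beta> j))\<^sup>2)"
          by (rule sum_mono, rule mult_right_mono, insert wmono gq, auto simp: g_def)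
        also have "\<dots> = \<omega>!i * N"
          unfolding N_def V_def eq norm_sq_lc[OF ow' finite_imageI[OF finite_lessThan]] by (simp add: sum_distrib_left)
        finally show ?thesis .
      qed
      have yL: "vnorm2 (y V) \<le> (s0 - s!i) * vnorm2 V"
        unfolding y_def V_def
      proof (rule y_bound[OF X ou'])
        show "finite {..<k}" by simp
      next
        fix j assume "j \<in> {..<k}"
        hence j: "j < n" using k by auto
        show "X *\<^sub>v u j = complex_of_real (s!j) \<cdot>\<^sub>v u j" by (rule evu[OF j])
      next
        fix j assume "j \<in> {..<k}"
        hence j: "j \<le> i" "j < n" using k i by auto
        show "0 \<le> s0 - s!j \<and> s0 - s!j \<le> s0 - s!i"
          using smono[of 0 j] smono[of j i] j i unfolding s0_def by auto
      next
        show "0 \<le> s0 - s!i" using smono[of 0 i] i unfolding s0_def by auto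
      qed
      have I4': "(vnorm2 (mat_adjoint B *\<^sub>v V))\<^sup>2 \<le> b\<^sup>2 * N"
        using I4[OF V] unfolding N_def by (simp add: power_mult_distrib)
      have "- 2 * (a * (s0 - s!i) * N) \<le> - 2 * (vnorm2 V * (a * vnorm2 (y V)))"
      proof -
        have "vnorm2 V * (a * vnorm2 (y V)) \<le> vnorm2 V * (a * ((s0 - s!i) * vnorm2 V))"
          using yL a vnorm2_nonneg[of V] by (simp add: mult_left_mono)
        thus ?thesis unfolding N_def by (simp add: power2_eq_square algebra_simps)
      qed
      also have "\<dots> \<le> - 2 * cmod (ip V (A *\<^sub>v y V))" using I3[OF V y[OF V]] by simp
      also have "\<dots> \<le> 2 * Re (ip V (A *\<^sub>v y V))" using abs_Re_le_cmod[of "ip V (A *\<^sub>v y V)"] by linarith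
      finally have "2 * s0 * Re (ip V (A *\<^sub>v V)) \<ge> - 2 * (a * (s0 - s!i) * N) - b\<^sup>2 * N"
        using I1[OF V] I4' by linarith
      hence "s0 * Re (ip V (H *\<^sub>v V)) \<ge> - (a * (s0 - s!i) * N) - b\<^sup>2 * N / 2" unfolding I2[OF V] by simp
      moreover have "s0 * Re (ip V (H *\<^sub>v V)) \<le> s0 * (\<omega>!i * N)" by (rule mult_left_mono[OF hL s00])
      ultimately have "(- a * (s0 - s!i) - b\<^sup>2 / 2) * N \<le> (s0 * \<omega>!i) * N" by (simp add: algebra_simps)
      thus ?thesis using N by simp
    qed
    show "s ! (k - 1) / s ! 0 - 1 - (spec_norm B)\<^sup>2 / (2 * s ! 0 * spec_norm A) \<le> \<omega> ! (k - 1) / spec_norm A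
      \<and> \<omega> ! (k - 1) / spec_norm A \<le> 1 - s ! (n - k) / s ! 0"
    proof (cases "s0 = 0")
      case False
      hence "s0 > 0" using s00 by simp
      from final_arith[OF a this upper lower] show ?thesis
        unfolding a_def b_def s0_def i_def by simp
    next
      case True
      have wi: "\<bar>\<omega>!i\<bar> \<le> a"
      proof -
        have wc: "w i \<in> carrier_vec n" and w1: "ip (w i) (w i) = 1" using ow i unfolding onb_def by auto
        have "Re (ip (w i) (H *\<^sub>v w i)) = \<omega>!i" unfolding evw[OF i(1)] ip_smult_right[OF wc wc] w1 by simp
        hence "\<omega>!i = Re (ip (w i) (A *\<^sub>v w i))" using I2[OF wc] by simp
        moreover have "\<bar>Re (ip (w i) (A *\<^sub>v w i))\<bar> \<le> vnorm2 (w i) * (a * vnorm2 (w i))"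
          using abs_Re_le_cmod[of "ip (w i) (A *\<^sub>v w i)"] I3[OF wc wc] by linarith
        moreover have "vnorm2 (w i) = 1"
        proof -
          have "complex_of_real ((vnorm2 (w i))\<^sup>2) = 1" using ip_self[of "w i"] w1 by simp
          hence "(vnorm2 (w i))\<^sup>2 = 1" by (metis of_real_eq_1_iff)
          thus ?thesis using vnorm2_nonneg[of "w i"] by (simp add: power2_eq_1_iff)
        qed
        ultimately show ?thesis by simp
      qed
      have "- 1 \<le> \<omega>!i / a" "\<omega>!i / a \<le> 1" using wi a by (auto simp: divide_le_eq le_divide_eq abs_le_iff)
      thus ?thesis using True unfolding a_def b_def s0_def i_def by simp
    qed
  qed
qed


end
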